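(* Let $p\in\mathbb{N}^+$, $s\ge1$, $\varepsilon\in(0,1]$, $T>0$, and let $\psi\in L^\infty([0,T];H^{s+1}(\Omega))$ be the solution of the relativistic NLSE $$i\partial_t\psi+\langle\nabla\rangle\psi+\varepsilon^p\langle\nabla\rangle^{-1}f\big(\tfrac12(\psi+\bar\psi)\big)=0,\quad x\in\Omega,$$ with periodic boundary conditions, and write $\psi(t)=\mathcal{S}_{e,t}(\psi(0))$ for its exact flow. Then for $0<\tau\le1/\varepsilon^p$ and any $t_n\ge0$ with $t_n+\tau\le T$, $$\|\mathcal{S}_\tau(\psi(t_n))-\mathcal{S}_{e,\tau}(\psi(t_n))\|_s\le M_0\varepsilon^p\tau^3,$$ where $M_0$ depends only on $\|\psi\|_{L^\infty([0,T];H^{s+1})}$ (and $s,p,\Omega$), not on $\varepsilon$, $\tau$ or $n$.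
   Context: $\Omega=(a,b)$, $\mu_l=2\pi l/(b-a)$; $\|z\|_s^2=\sum_{l\in\mathbb{Z}}(1+\mu_l^2)^s|\hat z_l|^2$ for $z=\sum_l\hat z_le^{i\mu_l(x-a)}$. $\langle\nabla\rangle$ is the Fourier multiplier by $\sqrt{1+\mu_l^2}$, $\langle\nabla\rangle^{-1}$ its inverse. $f(z)=z^{p+1}$, $G(\phi)=f(\frac12(\phi+\bar\phi))$, $F(\phi)=i\langle\nabla\rangle^{-1}G(\phi)$. Flows: $\varphi^t_T(\psi_0)=e^{it\langle\nabla\rangle}\psi_0$, $\varphi^t_V(\psi_0)=\psi_0+\varepsilon^ptF(\psi_0)$. Strang splitting: $\mathcal{S}_\tau=\varphi_T^{\tau/2}\circ\varphi_V^\tau\circ\varphi_T^{\tau/2}$. *)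

theory Defs
  imports "HOL-Analysis.Analysis"
begin

text \<open>Functions on the periodic interval (a,b) are represented by their Fourier
  coefficient sequences: z = sum_l zhat l * exp(i mu_l (x - a)).\<close>

type_synonym coeffs = "int \<Rightarrow> complex"

definition mu :: "real \<Rightarrow> real \<Rightarrow> int \<Rightarrow> real" where
  "mu a b l = 2 * pi * real_of_int l / (b - a)"

text \<open>The symbol of the Fourier multiplier <nabla>: sqrt(1 + mu_l^2).\<close>
definition jbr :: "real \<Rightarrow> real \<Rightarrow> int \<Rightarrow> real" where
  "jbr a b l = sqrt (1 + (mu a b l)\<^sup>2)"

text \<open>Squared H^s norm, valued in ennreal (infinite if z is not in H^s).\<close>
definition hs_sq :: "real \<Rightarrow> real \<Rightarrow> real \<Rightarrow> coeffs \<Rightarrow> ennreal" where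
  "hs_sq a b s z = (\<Sum>\<^sub>\<infinity> l. ennreal ((1 + (mu a b l)\<^sup>2) powr s * (cmod (z l))\<^sup>2))"

text \<open>Fourier coefficients of a product = convolution of coefficients.\<close>
definition conv :: "coeffs \<Rightarrow> coeffs \<Rightarrow> coeffs" where
  "conv u v = (\<lambda>l. \<Sum>\<^sub>\<infinity> k. u k * v (l - k))"

fun conv_pow :: "coeffs \<Rightarrow> nat \<Rightarrow> coeffs" where
  "conv_pow u 0 = (\<lambda>l. if l = 0 then 1 else 0)"
| "conv_pow u (Suc n) = conv u (conv_pow u n)"

text \<open>Coefficients of (phi + conj phi)/2.\<close>
definition re_part :: "coeffs \<Rightarrow> coeffs" where
  "re_part z = (\<lambda>l. (z l + cnj (z (- l))) / 2)"

text \<open>G(phi) = f((phi + conj phi)/2) with f(z) = z^(p+1).\<close>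
definition Gnl :: "nat \<Rightarrow> coeffs \<Rightarrow> coeffs" where
  "Gnl p z = conv_pow (re_part z) (p + 1)"

definition Fnl :: "real \<Rightarrow> real \<Rightarrow> nat \<Rightarrow> coeffs \<Rightarrow> coeffs" where
  "Fnl a b p z = (\<lambda>l. \<i> * Gnl p z l / complex_of_real (jbr a b l))"

definition phiT :: "real \<Rightarrow> real \<Rightarrow> real \<Rightarrow> coeffs \<Rightarrow> coeffs" where
  "phiT a b t z = (\<lambda>l. exp (\<i> * complex_of_real (t * jbr a b l)) * z l)"

definition phiV :: "real \<Rightarrow> real \<Rightarrow> nat \<Rightarrow> real \<Rightarrow> real \<Rightarrow> coeffs \<Rightarrow> coeffs" where
  "phiV a b p eps t z = (\<lambda>l. z l + complex_of_real (eps ^ p * t) * Fnl a b p z l)"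

definition strang :: "real \<Rightarrow> real \<Rightarrow> nat \<Rightarrow> real \<Rightarrow> real \<Rightarrow> coeffs \<Rightarrow> coeffs" where
  "strang a b p eps tau = phiT a b (tau / 2) \<circ> phiV a b p eps tau \<circ> phiT a b (tau / 2)"

text \<open>psi solves i psi_t + <nabla> psi + eps^p <nabla>^{-1} G(psi) = 0 on [0,T],
  written mode by mode: d/dt psi_l = i (<mu_l> psi_l + eps^p <mu_l>^{-1} G(psi)_l).\<close>
definition is_solution :: "real \<Rightarrow> real \<Rightarrow> nat \<Rightarrow> real \<Rightarrow> real \<Rightarrow> (real \<Rightarrow> coeffs) \<Rightarrow> bool" where
  "is_solution a b p eps T psi \<longleftrightarrow>
     (\<forall>l. \<forall>t\<in>{0..T}.
        ((\<lambda>t'. psi t' l) has_vector_derivative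
           (\<i> * (complex_of_real (jbr a b l) * psi t l
                 + complex_of_real (eps ^ p / jbr a b l) * Gnl p (psi t) l)))
        (at t within {0..T}))"

end

theory Submission
  imports Defs
begin

abbreviation CS :: "(int \<Rightarrow> ennreal) \<Rightarrow> ennreal" where
  "CS g \<equiv> (\<integral>\<^sup>+x. g x \<partial>count_space UNIV)"

lemma CS_SUP: "CS g = (SUP F\<in>{F. finite F}. sum g F)"
proof (rule antisym)
  have "CS g = (\<integral>\<^sup>+n. g (int_decode n) \<partial>count_space UNIV)"
    using nn_integral_bij_count_space[OF bij_int_decode, of g] by simp
  also have "\<dots> = (\<Sum>n. g (int_decode n))" by (rule nn_integral_count_space_nat)
  also have "\<dots> = (SUP n. sum (\<lambda>i. g (int_decode i)) {..<n})" by (rule suminf_eq_SUP)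
  also have "\<dots> \<le> (SUP F\<in>{F. finite F}. sum g F)"
  proof (rule SUP_least)
    fix n
    have "sum (\<lambda>i. g (int_decode i)) {..<n} = sum g (int_decode ` {..<n})"
      by (simp add: sum.reindex inj_int_decode)
    also have "\<dots> \<le> (SUP F\<in>{F. finite F}. sum g F)"
      by (rule SUP_upper) auto
    finally show "sum (\<lambda>i. g (int_decode i)) {..<n} \<le> (SUP F\<in>{F. finite F}. sum g F)" .
  qed
  finally show "CS g \<le> (SUP F\<in>{F. finite F}. sum g F)" .
next
  show "(SUP F\<in>{F. finite F}. sum g F) \<le> CS g"
  proof (rule SUP_least)
    fix F :: "int set" assume "F \<in> {F. finite F}"
    then have fin: "finite F" by simp
    have "sum g F = (\<integral>\<^sup>+x. g x \<partial>count_space F)"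
      using nn_integral_count_space_finite[OF fin] by simp
    also have "\<dots> = (\<integral>\<^sup>+x. g x * indicator F x \<partial>count_space UNIV)"
      by (simp add: nn_integral_count_space_indicator)
    also have "\<dots> \<le> CS g"
      by (intro nn_integral_mono) (auto simp: indicator_def)
    finally show "sum g F \<le> CS g" .
  qed
qed

lemma infsum_CS: "infsum g UNIV = CS g"
  unfolding CS_SUP by (subst nonneg_infsum_complete) auto

lemma finite_sum_le_CS: "finite F \<Longrightarrow> sum g F \<le> CS g"
  unfolding CS_SUP by (rule SUP_upper) auto

lemma CS_summable:
  fixes f :: "int \<Rightarrow> complex"
  assumes "CS (\<lambda>k. ennreal (norm (f k))) < \<infinity>"
  shows "f summable_on UNIV" and "(\<lambda>k. norm (f k)) summable_on UNIV"
    and "ennreal (infsum (\<lambda>k. norm (f k)) UNIV) = CS (\<lambda>k. ennreal (norm (f k)))"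
proof -
  obtain M where M: "CS (\<lambda>k. ennreal (norm (f k))) = ennreal M" "M \<ge> 0"
    using assms by (cases "CS (\<lambda>k. ennreal (norm (f k)))") auto
  have bdd: "bdd_above (sum (\<lambda>x. norm (f x)) ` {F. F\<subseteq>UNIV \<and> finite F})"
  proof (rule bdd_aboveI2)
    fix F :: "int set" assume "F \<in> {F. F\<subseteq>UNIV \<and> finite F}"
    then have "ennreal (sum (\<lambda>x. norm (f x)) F) \<le> ennreal M"
      using finite_sum_le_CS[of F "\<lambda>k. ennreal (norm (f k))"] M
      by (simp add: sum_ennreal)
    then show "sum (\<lambda>x. norm (f x)) F \<le> M" using M(2) by simp
  qed
  show abs: "(\<lambda>k. norm (f k)) summable_on UNIV" using bdd abs_summable_iff_bdd_above by blast
  then show "f summable_on UNIV" using abs_summable_summable by blast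
  have "ennreal (infsum (\<lambda>k. norm (f k)) UNIV) = (SUP F\<in>{F. finite F \<and> F\<subseteq>UNIV}. ennreal (sum (\<lambda>k. norm (f k)) F))"
    by (rule infsum_nonneg_is_SUPREMUM_ennreal) (use abs in auto)
  also have "\<dots> = CS (\<lambda>k. ennreal (norm (f k)))"
    unfolding CS_SUP by (simp add: sum_ennreal)
  finally show "ennreal (infsum (\<lambda>k. norm (f k)) UNIV) = CS (\<lambda>k. ennreal (norm (f k)))" .
qed

lemma CS_norm_bound:
  fixes f :: "int \<Rightarrow> complex"
  shows "ennreal (norm (infsum f UNIV)) \<le> CS (\<lambda>k. ennreal (norm (f k)))"
proof (cases "CS (\<lambda>k. ennreal (norm (f k))) < \<infinity>")
  case True
  have "norm (infsum f UNIV) \<le> infsum (\<lambda>k. norm (f k)) UNIV"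
    by (rule norm_infsum_bound) (rule CS_summable(2)[OF True])
  then have "ennreal (norm (infsum f UNIV)) \<le> ennreal (infsum (\<lambda>k. norm (f k)) UNIV)"
    by (rule ennreal_leI)
  then show ?thesis using CS_summable(3)[OF True] by simp
next
  case False then have "CS (\<lambda>k. ennreal (norm (f k))) = top" by (simp add: not_less top_unique)
  then show ?thesis by simp
qed

lemma mu_add: "mu a b (k + m) = mu a b k + mu a b m"
  unfolding mu_def by (simp add: add_divide_distrib distrib_left)

lemma mu_neg: "mu a b (- k) = - mu a b k"
  unfolding mu_def by simp

lemma jbr_ge1: "1 \<le> jbr a b l"
  unfolding jbr_def by simp

lemma jbr_pos: "0 < jbr a b l"
  using jbr_ge1[of a b l] by linarith

lemma jbr_neg: "jbr a b (- l) = jbr a b l"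
  unfolding jbr_def by (simp add: mu_neg)

lemma jbr_0: "jbr a b 0 = 1"
  unfolding jbr_def mu_def by simp

lemma jbr_sq: "(jbr a b l)\<^sup>2 = 1 + (mu a b l)\<^sup>2"
  unfolding jbr_def by simp

lemma sqrt_subadd: "sqrt (1 + (x+y)\<^sup>2) \<le> sqrt (1 + x\<^sup>2) + sqrt (1 + (y::real)\<^sup>2)"
proof (rule real_le_lsqrt)
  show "0 \<le> sqrt (1 + x\<^sup>2) + sqrt (1 + y\<^sup>2)" by simp
  have "sqrt (1 + x\<^sup>2) * sqrt (1 + y\<^sup>2) = sqrt ((1 + x\<^sup>2) * (1 + y\<^sup>2))"
    by (simp add: real_sqrt_mult)
  also have "\<dots> \<ge> sqrt ((x*y)\<^sup>2)"
    by (intro real_sqrt_le_mono) (auto simp: algebra_simps power2_eq_square)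
  finally have h: "sqrt (1 + x\<^sup>2) * sqrt (1 + y\<^sup>2) \<ge> x * y"
    by (metis abs_ge_self order_trans real_sqrt_abs)
  have "(sqrt (1 + x\<^sup>2) + sqrt (1 + y\<^sup>2))\<^sup>2 = 2 + x\<^sup>2 + y\<^sup>2 + 2 * (sqrt (1 + x\<^sup>2) * sqrt (1 + y\<^sup>2))"
    by (simp add: power2_eq_square algebra_simps)
  then show "1 + (x + y)\<^sup>2 \<le> (sqrt (1 + x\<^sup>2) + sqrt (1 + y\<^sup>2))\<^sup>2"
    using h by (simp add: power2_eq_square algebra_simps)
qed

lemma jbr_sub: "jbr a b l \<le> jbr a b k + jbr a b (l - k)"
proof -
  have "mu a b l = mu a b k + mu a b (l - k)" using mu_add[of a b k "l - k"] by simp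
  then show ?thesis unfolding jbr_def using sqrt_subadd by metis
qed

lemma powr_split:
  assumes "0 \<le> r"
  shows "jbr a b l powr r \<le> 2 powr r * (jbr a b k powr r + jbr a b (l - k) powr r)"
proof -
  let ?x = "jbr a b k" and ?y = "jbr a b (l - k)"
  have "jbr a b l \<le> 2 * max ?x ?y" using jbr_sub[of a b l k] by linarith
  then have "jbr a b l powr r \<le> (2 * max ?x ?y) powr r"
    using assms by (intro powr_mono2) (auto simp: less_imp_le[OF jbr_pos])
  also have "\<dots> = 2 powr r * max ?x ?y powr r"
    using jbr_pos by (simp add: powr_mult)
  also have "max ?x ?y powr r \<le> ?x powr r + ?y powr r"
    by (cases "?x \<le> ?y") (auto simp: max_def)
  finally show ?thesis by (simp add: mult_left_mono)
qed

lemma powr_neg_split: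
  assumes "0 \<le> t"
  shows "jbr a b k powr (-t) * jbr a b (l - k) powr (-t)
     \<le> 2 powr t * jbr a b l powr (-t) * (jbr a b k powr (-t) + jbr a b (l - k) powr (-t))"
proof -
  let ?x = "jbr a b k" and ?y = "jbr a b (l - k)" and ?z = "jbr a b l"
  have px: "?x > 0" "?y > 0" "?z > 0" using jbr_pos by auto
  have s: "?z powr t \<le> 2 powr t * (?x powr t + ?y powr t)" by (rule powr_split[OF assms])
  have "?x powr (-t) * ?y powr (-t) = ?z powr (-t) * (?z powr t * (?x powr (-t) * ?y powr (-t)))"
    using px by (simp add: powr_minus field_simps)
  also have "\<dots> \<le> ?z powr (-t) * ((2 powr t * (?x powr t + ?y powr t)) * (?x powr (-t) * ?y powr (-t)))"
    using s by (intro mult_left_mono mult_right_mono) auto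
  also have "\<dots> = 2 powr t * ?z powr (-t) * (?x powr (-t) + ?y powr (-t))"
    using px by (simp add: powr_minus field_simps)
  finally show ?thesis .
qed

lemma int_decode_bound: "(real n + 1)\<^sup>2 \<le> 8 * (1 + (real_of_int (int_decode n))\<^sup>2)"
proof -
  have h: "\<bar>real_of_int (int_decode n)\<bar> \<ge> (real n - 1) / 2"
  proof (cases "even n")
    case True
    then obtain m where m: "n = 2 * m" by (elim evenE)
    then have "int_decode n = int m" unfolding int_decode_def sum_decode_def by simp
    then show ?thesis using m by simp
  next
    case False
    then obtain m where m: "n = 2 * m + 1" by (elim oddE)
    then have "int_decode n = - int m - 1" unfolding int_decode_def sum_decode_def by simp
    then show ?thesis using m by simp
  qed
  show ?thesis
  proof (cases "real n \<ge> 1")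
    case True
    then have "((real n - 1) / 2)\<^sup>2 \<le> (real_of_int (int_decode n))\<^sup>2"
      using h by (metis abs_le_square_iff abs_of_nonneg diff_ge_0_iff_ge divide_nonneg_nonneg zero_le_numeral)
    moreover have "0 \<le> (real n - 3)\<^sup>2" by simp
    ultimately show ?thesis by (simp add: power2_eq_square algebra_simps)
  next
    case False
    then have "n = 0" by simp
    then show ?thesis by simp
  qed
qed

lemma Sj_finite:
  assumes "a < b"
  shows "CS (\<lambda>l. ennreal (1 / (jbr a b l)\<^sup>2)) < \<infinity>"
proof -
  define c where "c = 2 * pi / (b - a)"
  have c: "c > 0" using assms by (simp add: c_def)
  have mu: "mu a b l = c * real_of_int l" for l unfolding mu_def c_def by simp
  define C where "C = 1 + 1 / c\<^sup>2"
  have C: "C \<ge> 1" "C * c\<^sup>2 \<ge> 1" using c by (auto simp: C_def field_simps)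
  have "1 / (jbr a b l)\<^sup>2 \<le> C / (1 + (real_of_int l)\<^sup>2)" for l
  proof -
    have "(real_of_int l)\<^sup>2 \<le> (C * c\<^sup>2) * (real_of_int l)\<^sup>2"
      using C(2) by (simp add: mult_le_cancel_right1)
    then have "1 + (real_of_int l)\<^sup>2 \<le> C * (1 + c\<^sup>2 * (real_of_int l)\<^sup>2)"
      using C(1) by (simp add: distrib_left mult.assoc)
    moreover have "(jbr a b l)\<^sup>2 = 1 + c\<^sup>2 * (real_of_int l)\<^sup>2"
      by (simp add: jbr_sq mu power_mult_distrib)
    moreover have "0 < 1 + (real_of_int l)\<^sup>2" by (simp add: add_pos_nonneg)
    ultimately have "C / (C * (1 + c\<^sup>2 * (real_of_int l)\<^sup>2)) \<le> C / (1 + (real_of_int l)\<^sup>2)"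
      using C by (intro divide_left_mono) auto
    then show ?thesis using C \<open>(jbr a b l)\<^sup>2 = _\<close> by simp
  qed
  then have "CS (\<lambda>l. ennreal (1 / (jbr a b l)\<^sup>2)) \<le> CS (\<lambda>l. ennreal (C / (1 + (real_of_int l)\<^sup>2)))"
    by (intro nn_integral_mono ennreal_leI) auto
  also have "\<dots> = (\<integral>\<^sup>+n. ennreal (C / (1 + (real_of_int (int_decode n))\<^sup>2)) \<partial>count_space UNIV)"
    using nn_integral_bij_count_space[OF bij_int_decode, of "\<lambda>l. ennreal (C / (1 + (real_of_int l)\<^sup>2))"] by simp
  also have "\<dots> = (\<Sum>n. ennreal (C / (1 + (real_of_int (int_decode n))\<^sup>2)))"
    by (rule nn_integral_count_space_nat)
  also have "\<dots> \<le> (\<Sum>n. ennreal (8 * C * inverse (real (Suc n) ^ 2)))"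
  proof (intro suminf_le ennreal_leI allI)
    fix n
    have "C / (1 + (real_of_int (int_decode n))\<^sup>2) \<le> C / ((real n + 1)\<^sup>2 / 8)"
      using int_decode_bound[of n] C by (intro divide_left_mono) (auto intro!: mult_pos_pos add_pos_nonneg)
    moreover have "C / ((real n + 1)\<^sup>2 / 8) = 8 * C * inverse (real (Suc n) ^ 2)"
      by (simp add: field_simps add_pos_nonneg)
    ultimately show "C / (1 + (real_of_int (int_decode n))\<^sup>2) \<le> 8 * C * inverse (real (Suc n) ^ 2)"
      by simp
  qed auto
  also have "\<dots> = ennreal (\<Sum>n. 8 * C * inverse (real (Suc n) ^ 2))"
  proof (rule suminf_ennreal2)
    have "summable (\<lambda>n. inverse (real n ^ 2))"
      by (rule inverse_power_summable) simp
    then have "summable (\<lambda>n. inverse (real (Suc n) ^ 2))"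
      by (subst summable_Suc_iff) 
    then show "summable (\<lambda>n. 8 * C * inverse (real (Suc n) ^ 2))"
      by (rule summable_mult)
  qed (use C in auto)
  also have "\<dots> < \<infinity>" by simp
  finally show ?thesis .
qed

lemma CS_cmult: "CS (\<lambda>k. c * f k) = c * CS f"
  by (rule nn_integral_cmult) simp

lemma CS_cmult_right: "CS (\<lambda>k. f k * c) = CS f * c"
  using CS_cmult[of c f] by (simp add: mult.commute)

lemma CS_add: "CS (\<lambda>k. f k + g k) = CS f + CS g"
  by (rule nn_integral_add) auto

lemma CS_mono: "(\<And>k. f k \<le> g k) \<Longrightarrow> CS f \<le> CS g"
  by (rule nn_integral_mono) simp

lemma CS_swap: "CS (\<lambda>k. CS (\<lambda>m. F k m)) = CS (\<lambda>m. CS (\<lambda>k. F k m))"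
  by (rule nn_integral_count_space_nn_integral[symmetric]) auto

lemma CS_shift: "CS (\<lambda>l. y (l - k)) = CS y"
proof -
  have "bij_betw (\<lambda>l. l - k) UNIV (UNIV::int set)"
    by (rule bij_betwI[where g="\<lambda>l. l + k"]) auto
  then show ?thesis using nn_integral_bij_count_space[of "\<lambda>l. l - k" UNIV UNIV y] by simp
qed

lemma CS_reflect: "CS (\<lambda>k. y (l - k)) = CS y"
proof -
  have "bij_betw (\<lambda>k. l - k) UNIV (UNIV::int set)"
    by (rule bij_betwI[where g="\<lambda>k. l - k"]) auto
  then show ?thesis using nn_integral_bij_count_space[of "\<lambda>k. l - k" UNIV UNIV y] by simp
qed

lemma CS_neg: "CS (\<lambda>k. y (- k)) = CS y"
proof -
  have "bij_betw (\<lambda>k. - k) UNIV (UNIV::int set)"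
    by (rule bij_betwI[where g="\<lambda>k. - k"]) auto
  then show ?thesis using nn_integral_bij_count_space[of "\<lambda>k. - k" UNIV UNIV y] by simp
qed

lemma CS_square: "(CS f)\<^sup>2 = CS (\<lambda>k. CS (\<lambda>m. f k * f m))"
proof -
  have "CS (\<lambda>k. CS (\<lambda>m. f k * f m)) = CS (\<lambda>k. f k * CS f)"
    by (simp add: CS_cmult)
  also have "\<dots> = CS f * CS f" by (rule CS_cmult_right)
  finally show ?thesis by (simp add: power2_eq_square)
qed

definition cv :: "(int \<Rightarrow> ennreal) \<Rightarrow> (int \<Rightarrow> ennreal) \<Rightarrow> int \<Rightarrow> ennreal" where
  "cv x y l = CS (\<lambda>k. x k * y (l - k))"

lemma cv_comm: "cv x y = cv y x"
proof
  fix l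
  have "cv x y l = CS (\<lambda>k. (\<lambda>k. y k * x (l - k)) (l - k))"
    unfolding cv_def by (simp add: mult.commute)
  also have "\<dots> = cv y x l" unfolding cv_def by (rule CS_reflect)
  finally show "cv x y l = cv y x l" .
qed

lemma cv_mono: "(\<And>k. x k \<le> x' k) \<Longrightarrow> (\<And>k. y k \<le> y' k) \<Longrightarrow> cv x y l \<le> cv x' y' l"
  unfolding cv_def by (intro CS_mono mult_mono) auto

lemma cv_add_left: "cv (\<lambda>k. x k + x' k) y l = cv x y l + cv x' y l"
  unfolding cv_def by (simp add: distrib_right CS_add)

lemma cv_add_right: "cv x (\<lambda>k. y k + y' k) l = cv x y l + cv x y' l"
  unfolding cv_def by (simp add: distrib_left CS_add)

lemma cv_cmult_left: "cv (\<lambda>k. c * x k) y l = c * cv x y l"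
  unfolding cv_def by (simp add: mult.assoc CS_cmult)

lemma cv_cmult_right: "cv x (\<lambda>k. c * y k) l = c * cv x y l"
  unfolding cv_def by (simp add: mult.left_commute CS_cmult)

lemma ennreal_amgm: "2 * u * v \<le> u\<^sup>2 + (v::ennreal)\<^sup>2"
proof (cases "u = top \<or> v = top")
  case True
  then have "u\<^sup>2 + v\<^sup>2 = top" by (auto simp: power2_eq_square)
  then show ?thesis by (simp only:) simp
next
  case False
  then obtain r s where rs: "u = ennreal r" "v = ennreal s" "0 \<le> r" "0 \<le> s"
    by (metis ennreal_cases)
  have "2 * r * s \<le> r\<^sup>2 + s\<^sup>2" using sum_squares_bound[of r s] by (simp add: power2_eq_square)
  then have "ennreal (2 * r * s) \<le> ennreal (r\<^sup>2 + s\<^sup>2)" by (rule ennreal_leI)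
  moreover have "ennreal (2 * r * s) = 2 * u * v" using rs by (simp add: ennreal_mult)
  moreover have "ennreal (r\<^sup>2 + s\<^sup>2) = u\<^sup>2 + v\<^sup>2" using rs by (simp add: ennreal_plus ennreal_power)
  ultimately show ?thesis by simp
qed

lemma ennreal_sq_add: "(u + v)\<^sup>2 \<le> 2 * u\<^sup>2 + 2 * (v::ennreal)\<^sup>2"
proof -
  have "(u + v)\<^sup>2 = u\<^sup>2 + v\<^sup>2 + 2 * u * v" by (rule power2_sum)
  also have "\<dots> \<le> u\<^sup>2 + v\<^sup>2 + (u\<^sup>2 + v\<^sup>2)" by (intro add_left_mono ennreal_amgm)
  finally show ?thesis by (simp add: algebra_simps mult_2)
qed

lemma young:
  "CS (\<lambda>l. (cv x y l)\<^sup>2) \<le> CS (\<lambda>k. (x k)\<^sup>2) * (CS y)\<^sup>2"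
proof -
  define T where "T = CS (\<lambda>l. CS (\<lambda>k. CS (\<lambda>m. (x k)\<^sup>2 * y (l - k) * y (l - m))))"
  have T: "T = CS (\<lambda>k. (x k)\<^sup>2) * (CS y)\<^sup>2"
  proof -
    have "T = CS (\<lambda>l. CS (\<lambda>k. (x k)\<^sup>2 * y (l - k) * CS y))"
      unfolding T_def by (simp add: CS_cmult CS_reflect)
    also have "\<dots> = CS (\<lambda>k. CS (\<lambda>l. (x k)\<^sup>2 * CS y * y (l - k)))"
      by (subst CS_swap) (simp add: mult_ac)
    also have "\<dots> = CS (\<lambda>k. (x k)\<^sup>2 * CS y * CS y)"
      by (simp add: CS_cmult CS_shift)
    also have "\<dots> = CS (\<lambda>k. (x k)\<^sup>2 * (CS y)\<^sup>2)"
      by (simp only: mult.assoc power2_eq_square[of "CS y"])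
    also have "\<dots> = CS (\<lambda>k. (x k)\<^sup>2) * (CS y)\<^sup>2"
      by (rule CS_cmult_right)
    finally show ?thesis .
  qed
  have T': "CS (\<lambda>l. CS (\<lambda>k. CS (\<lambda>m. (x m)\<^sup>2 * y (l - k) * y (l - m)))) = T"
    unfolding T_def by (subst CS_swap) (simp add: mult_ac)
  have "2 * CS (\<lambda>l. (cv x y l)\<^sup>2) = CS (\<lambda>l. CS (\<lambda>k. CS (\<lambda>m. 2 * (x k * y (l - k)) * (x m * y (l - m)))))"
    unfolding cv_def CS_square by (simp add: CS_cmult mult.assoc)
  also have "\<dots> \<le> CS (\<lambda>l. CS (\<lambda>k. CS (\<lambda>m. (x k)\<^sup>2 * y (l - k) * y (l - m) + (x m)\<^sup>2 * y (l - k) * y (l - m))))"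
  proof (intro CS_mono)
    fix l k m
    have "2 * (x k * y (l - k)) * (x m * y (l - m)) = (2 * x k * x m) * (y (l - k) * y (l - m))"
      by (simp add: mult_ac)
    also have "\<dots> \<le> ((x k)\<^sup>2 + (x m)\<^sup>2) * (y (l - k) * y (l - m))"
      by (intro mult_right_mono ennreal_amgm) simp
    finally show "2 * (x k * y (l - k)) * (x m * y (l - m)) \<le> (x k)\<^sup>2 * y (l - k) * y (l - m) + (x m)\<^sup>2 * y (l - k) * y (l - m)"
      by (simp add: algebra_simps)
  qed
  also have "\<dots> = T + T"
    using T' unfolding T_def by (simp add: CS_add)
  finally have "2 * CS (\<lambda>l. (cv x y l)\<^sup>2) \<le> 2 * T" by (simp add: mult_2)
  then have "CS (\<lambda>l. (cv x y l)\<^sup>2) \<le> T"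
    by (subst (asm) ennreal_mult_le_mult_iff) auto
  then show ?thesis using T by simp
qed

definition Wt :: "real \<Rightarrow> real \<Rightarrow> real \<Rightarrow> (int \<Rightarrow> ennreal) \<Rightarrow> int \<Rightarrow> ennreal" where
  "Wt a b r x k = ennreal (jbr a b k powr r) * x k"

definition Qn :: "real \<Rightarrow> real \<Rightarrow> real \<Rightarrow> (int \<Rightarrow> ennreal) \<Rightarrow> ennreal" where
  "Qn a b r x = CS (\<lambda>k. (Wt a b r x k)\<^sup>2)"

lemma jbr_neq0[simp]: "jbr a b k \<noteq> 0"
  using jbr_pos[of a b k] by linarith

lemma jbr_abs[simp]: "\<bar>jbr a b k\<bar> = jbr a b k"
  using jbr_pos[of a b k] by simp

lemma sq_ratio: "0 < k \<Longrightarrow> 0 < m \<Longrightarrow> (ennreal (k / m))\<^sup>2 = ennreal (1 / m\<^sup>2) * (ennreal k)\<^sup>2"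
proof -
  assume "0 < k" "0 < m"
  have "(k/m)\<^sup>2 = 1/m\<^sup>2 * k\<^sup>2" by (simp add: power_divide)
  moreover have "ennreal (1/m\<^sup>2) * ennreal (k\<^sup>2) = ennreal (1/m\<^sup>2 * k\<^sup>2)" by (rule ennreal_mult[symmetric]) auto
  ultimately have "ennreal ((k/m)\<^sup>2) = ennreal (1/m\<^sup>2) * ennreal (k\<^sup>2)" by simp
  then show ?thesis using \<open>0 < k\<close> \<open>0 < m\<close> by (simp add: ennreal_power)
qed

lemma Wt_0[simp]: "Wt a b 0 x = x"
  unfolding Wt_def by (simp add: jbr_pos)

lemma Wt_Wt: "Wt a b r (Wt a b r' x) = Wt a b (r + r') x"
  unfolding Wt_def by (auto simp: powr_add mult.assoc ennreal_mult' jbr_pos)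

lemma Qn_Wt: "Qn a b r (Wt a b r' x) = Qn a b (r + r') x"
  unfolding Qn_def by (simp add: Wt_Wt)

lemma Qn_0: "Qn a b 0 x = CS (\<lambda>k. (x k)\<^sup>2)"
  unfolding Qn_def by simp

lemma Wt_mono_r: "r \<le> r' \<Longrightarrow> Wt a b r x k \<le> Wt a b r' x k"
  unfolding Wt_def using jbr_ge1[of a b k]
  by (intro mult_right_mono ennreal_leI powr_mono) auto

lemma Qn_mono_r: "r \<le> r' \<Longrightarrow> Qn a b r x \<le> Qn a b r' x"
  unfolding Qn_def by (intro CS_mono power_mono Wt_mono_r) auto

lemma Wt_mono: "(\<And>k. x k \<le> y k) \<Longrightarrow> Wt a b r x k \<le> Wt a b r y k"
  unfolding Wt_def by (intro mult_left_mono) auto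

lemma Qn_mono: "(\<And>k. x k \<le> y k) \<Longrightarrow> Qn a b r x \<le> Qn a b r y"
  unfolding Qn_def by (intro CS_mono power_mono Wt_mono) auto

lemma Qn_add: "Qn a b r (\<lambda>k. x k + y k) \<le> 2 * Qn a b r x + 2 * Qn a b r y"
proof -
  have "Qn a b r (\<lambda>k. x k + y k) = CS (\<lambda>k. (Wt a b r x k + Wt a b r y k)\<^sup>2)"
    unfolding Qn_def Wt_def by (simp add: distrib_left)
  also have "\<dots> \<le> CS (\<lambda>k. 2 * (Wt a b r x k)\<^sup>2 + 2 * (Wt a b r y k)\<^sup>2)"
    by (intro CS_mono ennreal_sq_add)
  also have "\<dots> = 2 * Qn a b r x + 2 * Qn a b r y"
    unfolding Qn_def by (simp add: CS_add CS_cmult)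
  finally show ?thesis .
qed

lemma Qn_cmult: "Qn a b r (\<lambda>k. c * x k) = c\<^sup>2 * Qn a b r x"
  unfolding Qn_def Wt_def by (simp add: CS_cmult[symmetric] power_mult_distrib mult_ac)

lemma Wt_cv_split:
  assumes "0 \<le> r"
  shows "Wt a b r (cv x y) l \<le> ennreal (2 powr r) * (cv (Wt a b r x) y l + cv x (Wt a b r y) l)"
proof -
  have "Wt a b r (cv x y) l = CS (\<lambda>k. ennreal (jbr a b l powr r) * (x k * y (l - k)))"
    unfolding Wt_def cv_def by (simp add: CS_cmult)
  also have "\<dots> \<le> CS (\<lambda>k. ennreal (2 powr r) * (Wt a b r x k * y (l - k) + x k * Wt a b r y (l - k)))"
  proof (intro CS_mono)
    fix k
    have "ennreal (jbr a b l powr r) \<le> ennreal (2 powr r * (jbr a b k powr r + jbr a b (l - k) powr r))"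
      by (intro ennreal_leI powr_split assms)
    also have "\<dots> = ennreal (2 powr r) * (ennreal (jbr a b k powr r) + ennreal (jbr a b (l - k) powr r))"
      by (simp add: ennreal_mult ennreal_plus)
    finally have "ennreal (jbr a b l powr r) * (x k * y (l - k)) \<le> ennreal (2 powr r) * (ennreal (jbr a b k powr r) + ennreal (jbr a b (l - k) powr r)) * (x k * y (l - k))"
      by (rule mult_right_mono) simp
    then show "ennreal (jbr a b l powr r) * (x k * y (l - k)) \<le> ennreal (2 powr r) * (Wt a b r x k * y (l - k) + x k * Wt a b r y (l - k))"
      unfolding Wt_def by (simp add: algebra_simps)
  qed
  also have "\<dots> = ennreal (2 powr r) * (cv (Wt a b r x) y l + cv x (Wt a b r y) l)"
    unfolding cv_def by (simp add: CS_cmult CS_add)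
  finally show ?thesis .
qed

lemma Qn_cv_split:
  assumes "0 \<le> r"
  shows "Qn a b r (cv x y) \<le> ennreal (2 * 4 powr r) * (Qn a b 0 (cv (Wt a b r x) y) + Qn a b 0 (cv x (Wt a b r y)))"
proof -
  have "Qn a b r (cv x y) \<le> CS (\<lambda>l. (ennreal (2 powr r) * (cv (Wt a b r x) y l + cv x (Wt a b r y) l))\<^sup>2)"
    unfolding Qn_def by (intro CS_mono power_mono Wt_cv_split assms) simp
  also have "\<dots> \<le> CS (\<lambda>l. ennreal (4 powr r) * (2 * (cv (Wt a b r x) y l)\<^sup>2 + 2 * (cv x (Wt a b r y) l)\<^sup>2))"
  proof (intro CS_mono)
    fix l
    have "4 powr r = 2 powr r * 2 powr r" using powr_mult[of 2 2 r] by simp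
    then have e: "(ennreal (2 powr r))\<^sup>2 = ennreal (4 powr r)"
      by (simp add: power2_eq_square ennreal_mult)
    show "(ennreal (2 powr r) * (cv (Wt a b r x) y l + cv x (Wt a b r y) l))\<^sup>2 \<le> ennreal (4 powr r) * (2 * (cv (Wt a b r x) y l)\<^sup>2 + 2 * (cv x (Wt a b r y) l)\<^sup>2)"
      unfolding power_mult_distrib e by (intro mult_left_mono ennreal_sq_add) simp
  qed
  also have "\<dots> = ennreal (2 * 4 powr r) * (Qn a b 0 (cv (Wt a b r x) y) + Qn a b 0 (cv x (Wt a b r y)))"
    unfolding Qn_0 by (simp add: CS_cmult CS_add ennreal_mult algebra_simps)
  finally show ?thesis .
qed

lemma young_Qn: "Qn a b 0 (cv x y) \<le> Qn a b 0 x * (CS y)\<^sup>2"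
  unfolding Qn_0 by (rule young)

lemma young_Qn': "Qn a b 0 (cv x y) \<le> (CS x)\<^sup>2 * Qn a b 0 y"
  using young_Qn[of a b y x] by (simp add: cv_comm mult.commute)

lemma Qn_cv_A:
  assumes "0 \<le> r"
  shows "Qn a b r (cv x y) \<le> ennreal (2 * 4 powr r) * (Qn a b r x * (CS y)\<^sup>2 + Qn a b 0 x * (CS (Wt a b r y))\<^sup>2)"
proof -
  have "Qn a b 0 (cv (Wt a b r x) y) \<le> Qn a b r x * (CS y)\<^sup>2"
    using young_Qn[of a b "Wt a b r x" y] by (simp add: Qn_Wt)
  moreover have "Qn a b 0 (cv x (Wt a b r y)) \<le> Qn a b 0 x * (CS (Wt a b r y))\<^sup>2"
    by (rule young_Qn)
  ultimately show ?thesis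
    using Qn_cv_split[OF assms, of a b x y]
    by (meson add_mono mult_left_mono order_trans zero_le)
qed

lemma Qn_cv_S:
  assumes "0 \<le> r"
  shows "Qn a b r (cv x y) \<le> ennreal (2 * 4 powr r) * (Qn a b r x * (CS y)\<^sup>2 + (CS x)\<^sup>2 * Qn a b r y)"
proof -
  have "Qn a b 0 (cv (Wt a b r x) y) \<le> Qn a b r x * (CS y)\<^sup>2"
    using young_Qn[of a b "Wt a b r x" y] by (simp add: Qn_Wt)
  moreover have "Qn a b 0 (cv x (Wt a b r y)) \<le> (CS x)\<^sup>2 * Qn a b r y"
    using young_Qn'[of a b x "Wt a b r y"] by (simp add: Qn_Wt)
  ultimately show ?thesis
    using Qn_cv_split[OF assms, of a b x y]
    by (meson add_mono mult_left_mono order_trans zero_le)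
qed

definition Sj :: "real \<Rightarrow> real \<Rightarrow> ennreal" where
  "Sj a b = CS (\<lambda>l. ennreal (1 / (jbr a b l)\<^sup>2))"

lemma L1_bound: "(CS z)\<^sup>2 \<le> Sj a b * Qn a b 1 z"
proof -
  let ?w = "\<lambda>k. ennreal (1 / (jbr a b k)\<^sup>2)"
  let ?v = "\<lambda>k. (Wt a b 1 z k)\<^sup>2"
  have "2 * (CS z)\<^sup>2 = CS (\<lambda>k. CS (\<lambda>m. 2 * z k * z m))"
    unfolding CS_square by (simp add: CS_cmult mult.assoc)
  also have "\<dots> \<le> CS (\<lambda>k. CS (\<lambda>m. ?w m * ?v k + ?w k * ?v m))"
  proof (intro CS_mono)
    fix k m
    let ?p = "ennreal (jbr a b k / jbr a b m) * z k" and ?q = "ennreal (jbr a b m / jbr a b k) * z m"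
    have pq: "ennreal (jbr a b k / jbr a b m) * ennreal (jbr a b m / jbr a b k) = 1"
      using jbr_pos[of a b k] jbr_pos[of a b m] by (simp add: ennreal_mult[symmetric])
    have "2 * z k * z m = 2 * ?p * ?q"
      using pq by (simp add: mult_ac)
    also have "\<dots> \<le> ?p\<^sup>2 + ?q\<^sup>2" by (rule ennreal_amgm)
    also have "?p\<^sup>2 = ?w m * ?v k"
      using sq_ratio[OF jbr_pos[of a b k] jbr_pos[of a b m]]
      by (simp add: Wt_def power_mult_distrib mult.assoc)
    also have "?q\<^sup>2 = ?w k * ?v m"
      using sq_ratio[OF jbr_pos[of a b m] jbr_pos[of a b k]]
      by (simp add: Wt_def power_mult_distrib mult.assoc)
    finally show "2 * z k * z m \<le> ?w m * ?v k + ?w k * ?v m" .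
  qed
  also have "\<dots> = CS (\<lambda>k. Sj a b * ?v k) + CS (\<lambda>k. ?w k * Qn a b 1 z)"
    unfolding Sj_def Qn_def by (simp add: CS_add CS_cmult CS_cmult_right)
  also have "\<dots> = 2 * (Sj a b * Qn a b 1 z)"
    unfolding Sj_def Qn_def by (simp add: CS_cmult CS_cmult_right mult.commute mult_2)
  finally show ?thesis
    by (subst (asm) ennreal_mult_le_mult_iff) auto
qed

lemma L1_bound_Wt: "(CS (Wt a b r y))\<^sup>2 \<le> Sj a b * Qn a b (r + 1) y"
  using L1_bound[of "Wt a b r y" a b] by (simp add: Qn_Wt add.commute)

lemma infsum_diff:
  fixes f g :: "'a \<Rightarrow> 'b::{topological_ab_group_add, t2_space}"
  assumes "f summable_on A" "g summable_on A"
  shows "infsum (\<lambda>x. f x - g x) A = infsum f A - infsum g A"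
proof -
  have "(\<lambda>x. - g x) summable_on A" using assms(2) summable_on_uminus by blast
  then have "infsum (\<lambda>x. f x + - g x) A = infsum f A + infsum (\<lambda>x. - g x) A"
    using infsum_add[OF assms(1)] by blast
  then show ?thesis by (simp add: infsum_uminus)
qed

lemma norm_infsum_CS:
  fixes f :: "int \<Rightarrow> complex"
  assumes "\<And>k. ennreal (norm (f k)) \<le> g k"
  shows "ennreal (norm (infsum f UNIV)) \<le> CS g"
proof -
  have "CS (\<lambda>k. ennreal (norm (f k))) \<le> CS g" using assms by (rule CS_mono)
  then show ?thesis using CS_norm_bound[of f] by (rule order_trans[rotated])
qed

lemma enorm_mult: "ennreal (norm ((x::complex) * y)) = ennreal (norm x) * ennreal (norm y)"
  by (simp add: norm_mult ennreal_mult)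

lemma conv_bound:
  assumes "\<And>k. ennreal (norm (u k)) \<le> x k" "\<And>k. ennreal (norm (v k)) \<le> y k"
  shows "ennreal (norm (conv u v l)) \<le> cv x y l"
  unfolding conv_def cv_def
  by (rule norm_infsum_CS) (simp add: enorm_mult assms mult_mono)

lemma conv_summable:
  fixes u v :: "int \<Rightarrow> complex"
  assumes "\<And>k. ennreal (norm (u k)) \<le> x k" "\<And>k. ennreal (norm (v k)) \<le> y k" "cv x y l < \<infinity>"
  shows "(\<lambda>k. u k * v (l - k)) summable_on UNIV"
proof (rule CS_summable(1)[of "\<lambda>k. u k * v (l - k)"])
  have "CS (\<lambda>k. ennreal (norm (u k * v (l - k)))) \<le> cv x y l"
    unfolding cv_def by (intro CS_mono) (simp add: enorm_mult assms mult_mono)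
  then show "CS (\<lambda>k. ennreal (norm (u k * v (l - k)))) < \<infinity>" using assms(3) by simp
qed

definition dl :: "int \<Rightarrow> ennreal" where "dl k = (if k = 0 then 1 else 0)"

fun Am :: "(int \<Rightarrow> ennreal) \<Rightarrow> nat \<Rightarrow> int \<Rightarrow> ennreal" where
  "Am x 0 = dl"
| "Am x (Suc n) = cv x (Am x n)"

fun Bm :: "(int \<Rightarrow> ennreal) \<Rightarrow> (int \<Rightarrow> ennreal) \<Rightarrow> nat \<Rightarrow> int \<Rightarrow> ennreal" where
  "Bm x y 0 = (\<lambda>_. 0)"
| "Bm x y (Suc n) = (\<lambda>l. cv y (Am x n) l + cv x (Bm x y n) l)"

fun Cm :: "(int \<Rightarrow> ennreal) \<Rightarrow> (int \<Rightarrow> ennreal) \<Rightarrow> (int \<Rightarrow> ennreal) \<Rightarrow> nat \<Rightarrow> int \<Rightarrow> ennreal" where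
  "Cm x y z 0 = (\<lambda>_. 0)"
| "Cm x y z (Suc n) = (\<lambda>l. cv z (Am x n) l + cv x (Cm x y z n) l + 2 * cv y (Bm x y n) l)"

lemma conv_pow_0_bound: "ennreal (norm (conv_pow u 0 l)) \<le> dl l"
  by (simp add: dl_def)

lemma second_diff_identity:
  fixes Rp R0 Rm Pp P0 Pm :: complex
  shows "Rp * Pp + Rm * Pm - 2 * (R0 * P0) = (Rp + Rm - 2 * R0) * P0 + R0 * (Pp + Pm - 2 * P0)
           + (Rp - R0) * (Pp - P0) + (Rm - R0) * (Pm - P0)"
  by (simp add: algebra_simps)

lemma first_diff_identity:
  fixes R1 R0 P1 P0 :: complex
  shows "R1 * P1 - R0 * P0 = (R1 - R0) * P1 + R0 * (P1 - P0)"
  by (simp add: algebra_simps)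

lemma conv_diff:
  assumes "\<And>k. ennreal (norm (R1 k)) \<le> x k" "\<And>k. ennreal (norm (P1 k)) \<le> y k"
    "\<And>k. ennreal (norm (R0 k)) \<le> x k" "\<And>k. ennreal (norm (P0 k)) \<le> y k" "cv x y l < \<infinity>"
  shows "conv R1 P1 l - conv R0 P0 l = infsum (\<lambda>k. R1 k * P1 (l - k) - R0 k * P0 (l - k)) UNIV"
  unfolding conv_def
  by (rule infsum_diff[symmetric]) (intro conv_summable[OF assms(1,2,5)] conv_summable[OF assms(3,4,5)])+

lemma conv_2diff:
  assumes "\<And>k. ennreal (norm (Rp k)) \<le> x k" "\<And>k. ennreal (norm (Pp k)) \<le> y k"
    "\<And>k. ennreal (norm (Rm k)) \<le> x k" "\<And>k. ennreal (norm (Pm k)) \<le> y k"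
    "\<And>k. ennreal (norm (R0 k)) \<le> x k" "\<And>k. ennreal (norm (P0 k)) \<le> y k" "cv x y l < \<infinity>"
  shows "conv Rp Pp l + conv Rm Pm l - 2 * conv R0 P0 l
     = infsum (\<lambda>k. Rp k * Pp (l - k) + Rm k * Pm (l - k) - 2 * (R0 k * P0 (l - k))) UNIV"
proof -
  have s1: "(\<lambda>k. Rp k * Pp (l - k)) summable_on UNIV" by (rule conv_summable[OF assms(1,2,7)])
  have s2: "(\<lambda>k. Rm k * Pm (l - k)) summable_on UNIV" by (rule conv_summable[OF assms(3,4,7)])
  have s3: "(\<lambda>k. R0 k * P0 (l - k)) summable_on UNIV" by (rule conv_summable[OF assms(5,6,7)])
  have "infsum (\<lambda>k. Rp k * Pp (l - k) + Rm k * Pm (l - k) - 2 * (R0 k * P0 (l - k))) UNIV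
      = infsum (\<lambda>k. Rp k * Pp (l - k) + Rm k * Pm (l - k)) UNIV - infsum (\<lambda>k. 2 * (R0 k * P0 (l - k))) UNIV"
    by (rule infsum_diff) (intro summable_on_add s1 s2, rule summable_on_cmult_right[OF s3])
  also have "\<dots> = conv Rp Pp l + conv Rm Pm l - 2 * conv R0 P0 l"
    unfolding conv_def by (simp add: infsum_add[OF s1 s2] infsum_cmult_right[OF s3])
  finally show ?thesis by simp
qed

lemma enorm_add_le: "ennreal (norm ((p::complex) + q)) \<le> ennreal (norm p) + ennreal (norm q)"
proof -
  have "ennreal (norm p) + ennreal (norm q) = ennreal (norm p + norm q)" by simp
  then show ?thesis using ennreal_leI[OF norm_triangle_ineq[of p q]] by simp
qed

lemma enorm_add4_le: "ennreal (norm ((p::complex) + q + r + s)) \<le> ennreal (norm p) + ennreal (norm q) + ennreal (norm r) + ennreal (norm s)"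
  by (meson add_mono enorm_add_le order_refl order_trans)

lemma eabs_sq: "ennreal \<bar>u\<bar> * ennreal \<bar>u\<bar> = ennreal (u\<^sup>2)"
  by (simp add: ennreal_mult[symmetric] power2_eq_square abs_mult_self_eq del: ennreal_mult)

lemma diffpow:
  fixes R :: "real \<Rightarrow> int \<Rightarrow> complex" and c u :: real
  assumes hA: "\<And>\<sigma> k. \<sigma> \<in> {c - u, c, c + u} \<Longrightarrow> ennreal (norm (R \<sigma> k)) \<le> x k"
    and hBp: "\<And>k. ennreal (norm (R (c + u) k - R c k)) \<le> ennreal \<bar>u\<bar> * y k"
    and hBm: "\<And>k. ennreal (norm (R (c - u) k - R c k)) \<le> ennreal \<bar>u\<bar> * y k"
    and hC: "\<And>k. ennreal (norm (R (c + u) k + R (c - u) k - 2 * R c k)) \<le> ennreal (u\<^sup>2) * z k"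
    and fin: "\<And>m l. Am x m l < \<infinity>"
  shows "(\<forall>\<sigma>\<in>{c - u, c, c + u}. \<forall>l. ennreal (norm (conv_pow (R \<sigma>) n l)) \<le> Am x n l) \<and>
         (\<forall>l. ennreal (norm (conv_pow (R (c + u)) n l - conv_pow (R c) n l)) \<le> ennreal \<bar>u\<bar> * Bm x y n l) \<and>
         (\<forall>l. ennreal (norm (conv_pow (R (c - u)) n l - conv_pow (R c) n l)) \<le> ennreal \<bar>u\<bar> * Bm x y n l) \<and>
         (\<forall>l. ennreal (norm (conv_pow (R (c + u)) n l + conv_pow (R (c - u)) n l - 2 * conv_pow (R c) n l))
              \<le> ennreal (u\<^sup>2) * Cm x y z n l)"
proof (induction n)
  case 0
  show ?case by (simp add: dl_def)
next
  case (Suc n)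
  define P where "P \<sigma> = conv_pow (R \<sigma>) n" for \<sigma>
  have IHA: "\<And>\<sigma> l. \<sigma> \<in> {c - u, c, c + u} \<Longrightarrow> ennreal (norm (P \<sigma> l)) \<le> Am x n l"
    using Suc.IH unfolding P_def by blast
  have IHBp: "\<And>l. ennreal (norm (P (c + u) l - P c l)) \<le> ennreal \<bar>u\<bar> * Bm x y n l"
    using Suc.IH unfolding P_def by blast
  have IHBm: "\<And>l. ennreal (norm (P (c - u) l - P c l)) \<le> ennreal \<bar>u\<bar> * Bm x y n l"
    using Suc.IH unfolding P_def by blast
  have IHC: "\<And>l. ennreal (norm (P (c + u) l + P (c - u) l - 2 * P c l)) \<le> ennreal (u\<^sup>2) * Cm x y z n l"
    using Suc.IH unfolding P_def by blast
  have finl: "\<And>l. cv x (Am x n) l < \<infinity>" using fin[of "Suc n"] by simp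
  have A: "\<forall>\<sigma>\<in>{c - u, c, c + u}. \<forall>l. ennreal (norm (conv_pow (R \<sigma>) (Suc n) l)) \<le> Am x (Suc n) l"
  proof (intro ballI allI)
    fix \<sigma> l assume s: "\<sigma> \<in> {c - u, c, c + u}"
    show "ennreal (norm (conv_pow (R \<sigma>) (Suc n) l)) \<le> Am x (Suc n) l"
      using conv_bound[of "R \<sigma>" x "P \<sigma>" "Am x n" l] hA[OF s] IHA[OF s] by (simp add: P_def)
  qed
  have B: "ennreal (norm (conv (R s) (P s) l - conv (R c) (P c) l)) \<le> ennreal \<bar>u\<bar> * Bm x y (Suc n) l"
    if s: "s \<in> {c - u, c + u}"
      and hB: "\<And>k. ennreal (norm (R s k - R c k)) \<le> ennreal \<bar>u\<bar> * y k"
      and IHB: "\<And>l. ennreal (norm (P s l - P c l)) \<le> ennreal \<bar>u\<bar> * Bm x y n l" for s l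
  proof -
    have s': "s \<in> {c - u, c, c + u}" "c \<in> {c - u, c, c + u}" using s by auto
    have "conv (R s) (P s) l - conv (R c) (P c) l = infsum (\<lambda>k. R s k * P s (l - k) - R c k * P c (l - k)) UNIV"
      by (rule conv_diff[where x=x and y="Am x n"]) (use hA[OF s'(1)] IHA[OF s'(1)] hA[OF s'(2)] IHA[OF s'(2)] finl in auto)
    also have "\<dots> = infsum (\<lambda>k. (R s k - R c k) * P s (l - k) + R c k * (P s (l - k) - P c (l - k))) UNIV"
      by (simp add: first_diff_identity)
    finally have eq: "conv (R s) (P s) l - conv (R c) (P c) l = \<dots>" .
    have "ennreal (norm (infsum (\<lambda>k. (R s k - R c k) * P s (l - k) + R c k * (P s (l - k) - P c (l - k))) UNIV))
       \<le> CS (\<lambda>k. ennreal \<bar>u\<bar> * (y k * Am x n (l - k)) + ennreal \<bar>u\<bar> * (x k * Bm x y n (l - k)))"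
    proof (rule norm_infsum_CS)
      fix k
      have "ennreal (norm ((R s k - R c k) * P s (l - k) + R c k * (P s (l - k) - P c (l - k))))
          \<le> ennreal (norm (R s k - R c k)) * ennreal (norm (P s (l - k))) + ennreal (norm (R c k)) * ennreal (norm (P s (l - k) - P c (l - k)))"
        unfolding enorm_mult[symmetric] by (rule enorm_add_le)
      also have "\<dots> \<le> (ennreal \<bar>u\<bar> * y k) * Am x n (l - k) + x k * (ennreal \<bar>u\<bar> * Bm x y n (l - k))"
        by (intro add_mono mult_mono hB IHA[OF s'(1)] hA[OF s'(2)] IHB) auto
      finally show "ennreal (norm ((R s k - R c k) * P s (l - k) + R c k * (P s (l - k) - P c (l - k))))
          \<le> ennreal \<bar>u\<bar> * (y k * Am x n (l - k)) + ennreal \<bar>u\<bar> * (x k * Bm x y n (l - k))"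
        by (simp add: mult_ac)
    qed
    also have "\<dots> = ennreal \<bar>u\<bar> * Bm x y (Suc n) l"
      by (simp add: CS_add CS_cmult cv_def distrib_left)
    finally show ?thesis using eq by simp
  qed
  have Bp: "\<forall>l. ennreal (norm (conv_pow (R (c + u)) (Suc n) l - conv_pow (R c) (Suc n) l)) \<le> ennreal \<bar>u\<bar> * Bm x y (Suc n) l"
    using B[of "c + u"] hBp IHBp by (simp add: P_def)
  have Bm': "\<forall>l. ennreal (norm (conv_pow (R (c - u)) (Suc n) l - conv_pow (R c) (Suc n) l)) \<le> ennreal \<bar>u\<bar> * Bm x y (Suc n) l"
    using B[of "c - u"] hBm IHBm by (simp add: P_def)
  have C: "ennreal (norm (conv (R (c + u)) (P (c + u)) l + conv (R (c - u)) (P (c - u)) l - 2 * conv (R c) (P c) l))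
      \<le> ennreal (u\<^sup>2) * Cm x y z (Suc n) l" for l
  proof -
    have s': "c + u \<in> {c - u, c, c + u}" "c - u \<in> {c - u, c, c + u}" "c \<in> {c - u, c, c + u}" by auto
    have "conv (R (c + u)) (P (c + u)) l + conv (R (c - u)) (P (c - u)) l - 2 * conv (R c) (P c) l
       = infsum (\<lambda>k. R (c + u) k * P (c + u) (l - k) + R (c - u) k * P (c - u) (l - k) - 2 * (R c k * P c (l - k))) UNIV"
      by (rule conv_2diff[where x=x and y="Am x n"]) (use hA[OF s'(1)] IHA[OF s'(1)] hA[OF s'(2)] IHA[OF s'(2)] hA[OF s'(3)] IHA[OF s'(3)] finl in auto)
    also have "\<dots> = infsum (\<lambda>k. (R (c + u) k + R (c - u) k - 2 * R c k) * P c (l - k)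
         + R c k * (P (c + u) (l - k) + P (c - u) (l - k) - 2 * P c (l - k))
         + (R (c + u) k - R c k) * (P (c + u) (l - k) - P c (l - k))
         + (R (c - u) k - R c k) * (P (c - u) (l - k) - P c (l - k))) UNIV"
      by (simp only: second_diff_identity)
    finally have eq: "conv (R (c + u)) (P (c + u)) l + conv (R (c - u)) (P (c - u)) l - 2 * conv (R c) (P c) l = \<dots>" .
    have "ennreal (norm (infsum (\<lambda>k. (R (c + u) k + R (c - u) k - 2 * R c k) * P c (l - k)
         + R c k * (P (c + u) (l - k) + P (c - u) (l - k) - 2 * P c (l - k))
         + (R (c + u) k - R c k) * (P (c + u) (l - k) - P c (l - k))
         + (R (c - u) k - R c k) * (P (c - u) (l - k) - P c (l - k))) UNIV))
       \<le> CS (\<lambda>k. ennreal (u\<^sup>2) * (z k * Am x n (l - k)) + ennreal (u\<^sup>2) * (x k * Cm x y z n (l - k))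
              + ennreal (u\<^sup>2) * (y k * Bm x y n (l - k)) + ennreal (u\<^sup>2) * (y k * Bm x y n (l - k)))"
    proof (rule norm_infsum_CS)
      fix k
      have "ennreal (norm ((R (c + u) k + R (c - u) k - 2 * R c k) * P c (l - k)
         + R c k * (P (c + u) (l - k) + P (c - u) (l - k) - 2 * P c (l - k))
         + (R (c + u) k - R c k) * (P (c + u) (l - k) - P c (l - k))
         + (R (c - u) k - R c k) * (P (c - u) (l - k) - P c (l - k))))
        \<le> ennreal (norm (R (c + u) k + R (c - u) k - 2 * R c k)) * ennreal (norm (P c (l - k)))
         + ennreal (norm (R c k)) * ennreal (norm (P (c + u) (l - k) + P (c - u) (l - k) - 2 * P c (l - k)))
         + ennreal (norm (R (c + u) k - R c k)) * ennreal (norm (P (c + u) (l - k) - P c (l - k)))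
         + ennreal (norm (R (c - u) k - R c k)) * ennreal (norm (P (c - u) (l - k) - P c (l - k)))"
        unfolding enorm_mult[symmetric] by (rule enorm_add4_le)
      also have "\<dots> \<le> (ennreal (u\<^sup>2) * z k) * Am x n (l - k) + x k * (ennreal (u\<^sup>2) * Cm x y z n (l - k))
         + (ennreal \<bar>u\<bar> * y k) * (ennreal \<bar>u\<bar> * Bm x y n (l - k)) + (ennreal \<bar>u\<bar> * y k) * (ennreal \<bar>u\<bar> * Bm x y n (l - k))"
        by (intro add_mono mult_mono hC IHA[OF s'(3)] hA[OF s'(3)] IHC hBp IHBp hBm IHBm) auto
      also have "\<dots> = ennreal (u\<^sup>2) * (z k * Am x n (l - k)) + ennreal (u\<^sup>2) * (x k * Cm x y z n (l - k))
              + ennreal (u\<^sup>2) * (y k * Bm x y n (l - k)) + ennreal (u\<^sup>2) * (y k * Bm x y n (l - k))"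
        by (simp add: eabs_sq[symmetric] mult_ac)
      finally show "ennreal (norm ((R (c + u) k + R (c - u) k - 2 * R c k) * P c (l - k)
         + R c k * (P (c + u) (l - k) + P (c - u) (l - k) - 2 * P c (l - k))
         + (R (c + u) k - R c k) * (P (c + u) (l - k) - P c (l - k))
         + (R (c - u) k - R c k) * (P (c - u) (l - k) - P c (l - k))))
        \<le> ennreal (u\<^sup>2) * (z k * Am x n (l - k)) + ennreal (u\<^sup>2) * (x k * Cm x y z n (l - k))
              + ennreal (u\<^sup>2) * (y k * Bm x y n (l - k)) + ennreal (u\<^sup>2) * (y k * Bm x y n (l - k))" .
    qed
    also have "\<dots> = ennreal (u\<^sup>2) * Cm x y z (Suc n) l"
      by (simp add: CS_add CS_cmult cv_def distrib_left mult_2)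
    finally show ?thesis using eq by simp
  qed
  show ?case using A Bp Bm' C by (simp add: P_def)
qed

lemma Qn_dl: "Qn a b r dl = 1"
proof -
  have "Qn a b r dl = (\<Sum>k\<in>{0}. (Wt a b r dl k)\<^sup>2)"
    unfolding Qn_def by (rule nn_integral_count_space') (auto simp: Wt_def dl_def)
  then show ?thesis by (simp add: Wt_def dl_def jbr_0)
qed

lemma Qn_zero: "Qn a b r (\<lambda>_. 0) = 0"
  unfolding Qn_def Wt_def by simp

abbreviation "Kr r \<equiv> ennreal (2 * 4 powr r)"

lemma G1:
  assumes "0 \<le> r"
  shows "Qn a b r (cv x y) \<le> Kr r * (Qn a b r x * (Sj a b * Qn a b 1 y) + Qn a b 1 x * (Sj a b * Qn a b r y))"
proof -
  have "Qn a b r (cv x y) \<le> Kr r * (Qn a b r x * (CS y)\<^sup>2 + (CS x)\<^sup>2 * Qn a b r y)"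
    by (rule Qn_cv_S[OF assms])
  also have "\<dots> \<le> Kr r * (Qn a b r x * (Sj a b * Qn a b 1 y) + (Sj a b * Qn a b 1 x) * Qn a b r y)"
    by (intro mult_left_mono add_mono mult_mono L1_bound) auto
  finally show ?thesis by (simp add: mult_ac)
qed

lemma G2:
  assumes "0 \<le> r"
  shows "Qn a b r (cv x y) \<le> Kr r * (Qn a b r x * (Sj a b * Qn a b 1 y) + Qn a b 0 x * (Sj a b * Qn a b (r + 1) y))"
proof -
  have "Qn a b r (cv x y) \<le> Kr r * (Qn a b r x * (CS y)\<^sup>2 + Qn a b 0 x * (CS (Wt a b r y))\<^sup>2)"
    by (rule Qn_cv_A[OF assms])
  also have "\<dots> \<le> Kr r * (Qn a b r x * (Sj a b * Qn a b 1 y) + Qn a b 0 x * (Sj a b * Qn a b (r + 1) y))"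
    by (intro mult_left_mono add_mono mult_mono L1_bound L1_bound_Wt) auto
  finally show ?thesis .
qed

lemma pow_bounds:
  fixes a b s :: real and K2 :: ennreal
  assumes ab: "a < b" and s: "1 \<le> s" and K2: "K2 < \<infinity>"
  shows "\<exists>M<\<infinity>. \<forall>x. Qn a b (s + 1) x \<le> K2 \<longrightarrow>
     Qn a b (s + 1) (Am x n) \<le> M \<and> Qn a b s (Bm x (Wt a b 1 x) n) \<le> M \<and>
     Qn a b (s - 1) (Cm x (Wt a b 1 x) (Wt a b 2 x) n) \<le> M"
proof (induction n)
  case 0
  show ?case by (intro exI[of _ 1]) (simp add: Qn_dl Qn_zero)
next
  case (Suc n)
  then obtain M where M: "M < \<infinity>" and HM: "\<And>x. Qn a b (s + 1) x \<le> K2 \<Longrightarrow>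
     Qn a b (s + 1) (Am x n) \<le> M \<and> Qn a b s (Bm x (Wt a b 1 x) n) \<le> M \<and>
     Qn a b (s - 1) (Cm x (Wt a b 1 x) (Wt a b 2 x) n) \<le> M" by blast
  define S where "S = Sj a b"
  have S: "S < \<infinity>" unfolding S_def Sj_def using Sj_finite[OF ab] .
  define U where "U = K2 * (S * M)"
  define M' where "M' = Kr (s + 1) * (U + U) + 2 * (Kr s * (U + U)) + 2 * (Kr s * (U + U))
      + (2 * (2 * (Kr (s - 1) * (U + U))) + 2 * (2 * (Kr (s - 1) * (U + U)))) + 2 * (2\<^sup>2 * (Kr (s - 1) * (U + U)))"
  have U: "U < \<infinity>" unfolding U_def using K2 S M by (simp add: ennreal_mult_less_top)
  have M'fin: "M' < \<infinity>" unfolding M'_def using U by (simp add: ennreal_mult_less_top power2_eq_square)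
  show ?case
  proof (intro exI[of _ M'] conjI allI impI)
    show "M' < \<infinity>" by (rule M'fin)
    fix x assume hx: "Qn a b (s + 1) x \<le> K2"
    let ?A = "Am x n" and ?B = "Bm x (Wt a b 1 x) n" and ?C = "Cm x (Wt a b 1 x) (Wt a b 2 x) n"
    have hA: "Qn a b (s + 1) ?A \<le> M" and hB: "Qn a b s ?B \<le> M" and hC: "Qn a b (s - 1) ?C \<le> M"
      using HM[OF hx] by auto
    have qx: "Qn a b r x \<le> K2" if "r \<le> s + 1" for r using Qn_mono_r[OF that] hx by (rule order_trans)
    have qA: "Qn a b r ?A \<le> M" if "r \<le> s + 1" for r using Qn_mono_r[OF that] hA by (rule order_trans)
    have qB: "Qn a b r ?B \<le> M" if "r \<le> s" for r using Qn_mono_r[OF that] hB by (rule order_trans)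
    have qC: "Qn a b r ?C \<le> M" if "r \<le> s - 1" for r using Qn_mono_r[OF that] hC by (rule order_trans)
    have qWx: "Qn a b r (Wt a b t x) \<le> K2" if "r + t \<le> s + 1" for r t
      using qx[OF that] by (simp add: Qn_Wt)
    have UU: "M * (S * K2) = U" unfolding U_def by (simp add: mult_ac)
    have EA: "Qn a b (s + 1) (Am x (Suc n)) \<le> Kr (s + 1) * (U + U)"
    proof -
      have "Qn a b (s + 1) (Am x (Suc n)) \<le> Kr (s + 1) * (Qn a b (s + 1) x * (S * Qn a b 1 ?A) + Qn a b 1 x * (S * Qn a b (s + 1) ?A))"
        unfolding S_def using G1[of "s + 1" a b x ?A] s by simp
      also have "\<dots> \<le> Kr (s + 1) * (K2 * (S * M) + K2 * (S * M))"
        using s by (intro mult_left_mono add_mono mult_mono qx qA) auto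
      finally show ?thesis unfolding U_def .
    qed
    have EB1: "Qn a b s (cv (Wt a b 1 x) ?A) \<le> Kr s * (U + U)"
    proof -
      have "Qn a b s (cv (Wt a b 1 x) ?A) \<le> Kr s * (Qn a b s (Wt a b 1 x) * (S * Qn a b 1 ?A) + Qn a b 1 (Wt a b 1 x) * (S * Qn a b s ?A))"
        unfolding S_def using G1[of s a b "Wt a b 1 x" ?A] s by simp
      also have "\<dots> \<le> Kr s * (K2 * (S * M) + K2 * (S * M))"
        using s by (intro mult_left_mono add_mono mult_mono qWx qA) auto
      finally show ?thesis unfolding U_def .
    qed
    have EB2: "Qn a b s (cv x ?B) \<le> Kr s * (U + U)"
    proof -
      have "Qn a b s (cv x ?B) \<le> Kr s * (Qn a b s x * (S * Qn a b 1 ?B) + Qn a b 1 x * (S * Qn a b s ?B))"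
        unfolding S_def using G1[of s a b x ?B] s by simp
      also have "\<dots> \<le> Kr s * (K2 * (S * M) + K2 * (S * M))"
        using s by (intro mult_left_mono add_mono mult_mono qx qB) auto
      finally show ?thesis unfolding U_def .
    qed
    have EB: "Qn a b s (Bm x (Wt a b 1 x) (Suc n)) \<le> 2 * (Kr s * (U + U)) + 2 * (Kr s * (U + U))"
    proof -
      have "Qn a b s (Bm x (Wt a b 1 x) (Suc n)) \<le> 2 * Qn a b s (cv (Wt a b 1 x) ?A) + 2 * Qn a b s (cv x ?B)"
        by (simp add: Qn_add)
      also have "\<dots> \<le> 2 * (Kr s * (U + U)) + 2 * (Kr s * (U + U))"
        by (intro add_mono mult_left_mono EB1 EB2) auto
      finally show ?thesis .
    qed
    have s0: "0 \<le> s - 1" using s by simp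
    have EC1: "Qn a b (s - 1) (cv (Wt a b 2 x) ?A) \<le> Kr (s - 1) * (U + U)"
    proof -
      have "Qn a b (s - 1) (cv (Wt a b 2 x) ?A) \<le> Kr (s - 1) * (Qn a b (s - 1) (Wt a b 2 x) * (S * Qn a b 1 ?A) + Qn a b 0 (Wt a b 2 x) * (S * Qn a b (s - 1 + 1) ?A))"
        unfolding S_def by (rule G2[OF s0])
      also have "\<dots> \<le> Kr (s - 1) * (K2 * (S * M) + K2 * (S * M))"
      proof -
        have f1: "Qn a b (s - 1) (Wt a b 2 x) \<le> K2" by (rule qWx) simp
        have f2: "Qn a b 0 (Wt a b 2 x) \<le> K2" by (rule qWx) (use s in simp)
        have f3: "Qn a b 1 ?A \<le> M" by (rule qA) (use s in simp)
        have f4: "Qn a b (s - 1 + 1) ?A \<le> M" by (rule qA) simp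
        show ?thesis by (intro mult_left_mono add_mono mult_mono f1 f2 f3 f4) auto
      qed
      finally show ?thesis unfolding U_def .
    qed
    have EC2: "Qn a b (s - 1) (cv x ?C) \<le> Kr (s - 1) * (U + U)"
    proof -
      have "Qn a b (s - 1) (cv x ?C) = Qn a b (s - 1) (cv ?C x)" by (simp add: cv_comm)
      also have "\<dots> \<le> Kr (s - 1) * (Qn a b (s - 1) ?C * (S * Qn a b 1 x) + Qn a b 0 ?C * (S * Qn a b (s - 1 + 1) x))"
        unfolding S_def by (rule G2[OF s0])
      also have "\<dots> \<le> Kr (s - 1) * (M * (S * K2) + M * (S * K2))"
        using s by (intro mult_left_mono add_mono mult_mono qx qC) auto
      finally show ?thesis unfolding UU .
    qed
    have EC3: "Qn a b (s - 1) (cv (Wt a b 1 x) ?B) \<le> Kr (s - 1) * (U + U)"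
    proof -
      have "Qn a b (s - 1) (cv (Wt a b 1 x) ?B) \<le> Kr (s - 1) * (Qn a b (s - 1) (Wt a b 1 x) * (S * Qn a b 1 ?B) + Qn a b 1 (Wt a b 1 x) * (S * Qn a b (s - 1) ?B))"
        unfolding S_def by (rule G1[OF s0])
      also have "\<dots> \<le> Kr (s - 1) * (K2 * (S * M) + K2 * (S * M))"
        using s by (intro mult_left_mono add_mono mult_mono qWx qB) auto
      finally show ?thesis unfolding U_def .
    qed
    have EC: "Qn a b (s - 1) (Cm x (Wt a b 1 x) (Wt a b 2 x) (Suc n)) \<le>
        (2 * (2 * (Kr (s - 1) * (U + U))) + 2 * (2 * (Kr (s - 1) * (U + U)))) + 2 * (2\<^sup>2 * (Kr (s - 1) * (U + U)))"
    proof -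
      have "Qn a b (s - 1) (Cm x (Wt a b 1 x) (Wt a b 2 x) (Suc n))
          \<le> 2 * Qn a b (s - 1) (\<lambda>l. cv (Wt a b 2 x) ?A l + cv x ?C l) + 2 * Qn a b (s - 1) (\<lambda>l. 2 * cv (Wt a b 1 x) ?B l)"
        by (simp add: Qn_add)
      also have "\<dots> \<le> 2 * (2 * Qn a b (s - 1) (cv (Wt a b 2 x) ?A) + 2 * Qn a b (s - 1) (cv x ?C)) + 2 * (2\<^sup>2 * Qn a b (s - 1) (cv (Wt a b 1 x) ?B))"
        unfolding Qn_cmult by (intro add_mono mult_left_mono Qn_add) auto
      also have "\<dots> \<le> 2 * (2 * (Kr (s - 1) * (U + U)) + 2 * (Kr (s - 1) * (U + U))) + 2 * (2\<^sup>2 * (Kr (s - 1) * (U + U)))"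
        by (intro add_mono mult_left_mono EC1 EC2 EC3) auto
      finally show ?thesis by (simp add: distrib_left)
    qed
    have le1: "\<And>p q r :: ennreal. p \<le> p + q + r" by (simp add: add.assoc add_increasing2)
    show "Qn a b (s + 1) (Am x (Suc n)) \<le> M'"
      using EA unfolding M'_def by (rule order_trans) (simp add: add.assoc add_increasing2)
    show "Qn a b s (Bm x (Wt a b 1 x) (Suc n)) \<le> M'"
      using EB unfolding M'_def by (rule order_trans) (simp add: add_increasing add_increasing2 add.assoc)
    show "Qn a b (s - 1) (Cm x (Wt a b 1 x) (Wt a b 2 x) (Suc n)) \<le> M'"
      using EC unfolding M'_def by (rule order_trans) (simp add: add_increasing)
  qed
qed

section \<open>Hermitian symmetry\<close>

definition herm :: "(int \<Rightarrow> complex) \<Rightarrow> bool" where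
  "herm u \<longleftrightarrow> (\<forall>k. u (- k) = cnj (u k))"

lemma herm_re_part: "herm (re_part z)"
  unfolding herm_def re_part_def by simp

lemma herm_conv:
  assumes "herm u" "herm v"
  shows "herm (conv u v)"
  unfolding herm_def
proof
  fix l
  have bij: "bij_betw (\<lambda>k::int. - k) UNIV UNIV"
    by (rule bij_betwI[where g="\<lambda>k. - k"]) auto
  have "conv u v (- l) = infsum (\<lambda>k. (\<lambda>k. u k * v (- l - k)) (- k)) UNIV"
    unfolding conv_def by (rule infsum_reindex_bij_betw[OF bij, symmetric])
  also have "\<dots> = infsum (\<lambda>k. cnj (u k * v (l - k))) UNIV"
  proof (rule infsum_cong)
    fix k
    have e: "- l - - k = - (l - k)" by simp
    have hu: "u (- k) = cnj (u k)" and hv: "v (- (l - k)) = cnj (v (l - k))"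
      using assms unfolding herm_def by blast+
    show "u (- k) * v (- l - - k) = cnj (u k * v (l - k))"
      unfolding e hu hv by simp
  qed
  also have "\<dots> = cnj (conv u v l)"
    unfolding conv_def by (rule infsum_cnj)
  finally show "conv u v (- l) = cnj (conv u v l)" .
qed

lemma herm_conv_pow:
  assumes "herm u" shows "herm (conv_pow u n)"
proof (induction n)
  case 0 show ?case by (simp add: herm_def)
next
  case (Suc n) then show ?case using herm_conv[OF assms] by simp
qed

lemma Gnl_herm: "Gnl p z (- k) = cnj (Gnl p z k)"
  using herm_conv_pow[OF herm_re_part, of z "p + 1"] unfolding herm_def Gnl_def by blast

section \<open>Pointwise majorants\<close>

definition pw :: "real \<Rightarrow> real \<Rightarrow> real \<Rightarrow> int \<Rightarrow> real" where
  "pw a b t k = jbr a b k powr (- t)"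

lemma pw_nonneg: "0 \<le> pw a b t k"
  unfolding pw_def by simp

lemma pw_0: "pw a b t 0 = 1"
  unfolding pw_def by (simp add: jbr_0)

lemma pw_le1: "0 \<le> t \<Longrightarrow> pw a b t k \<le> 1"
  unfolding pw_def using jbr_ge1[of a b k] by (simp add: powr_minus_divide ge_one_powr_ge_zero)

lemma pw_le_sq: "2 \<le> t \<Longrightarrow> pw a b t k \<le> 1 / (jbr a b k)\<^sup>2"
proof -
  assume t: "2 \<le> t"
  have "jbr a b k powr (- t) \<le> jbr a b k powr (- 2)"
    using jbr_ge1[of a b k] t by (intro powr_mono) auto
  also have "\<dots> = 1 / (jbr a b k)\<^sup>2"
    using powr_realpow[OF jbr_pos, of a b k 2] by (simp add: powr_minus_divide)
  finally show ?thesis unfolding pw_def .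
qed

definition Sjr :: "real \<Rightarrow> real \<Rightarrow> real" where "Sjr a b = enn2real (Sj a b)"

lemma Sj_eq: "a < b \<Longrightarrow> Sj a b = ennreal (Sjr a b)"
  unfolding Sjr_def Sj_def using Sj_finite[of a b] by simp

lemma Sjr_nonneg: "0 \<le> Sjr a b"
  unfolding Sjr_def by simp

definition Cc :: "real \<Rightarrow> real \<Rightarrow> real \<Rightarrow> real" where
  "Cc a b t = 2 powr t * 2 * Sjr a b"

lemma Cc_nonneg: "0 \<le> Cc a b t"
  unfolding Cc_def using Sjr_nonneg by simp

lemma pw_conv:
  assumes ab: "a < b" and t: "2 \<le> t"
  shows "CS (\<lambda>k. ennreal (pw a b t k * pw a b t (l - k))) \<le> ennreal (Cc a b t * pw a b t l)"
proof -
  have "CS (\<lambda>k. ennreal (pw a b t k * pw a b t (l - k)))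
     \<le> CS (\<lambda>k. ennreal (2 powr t * pw a b t l) * (ennreal (pw a b t k) + ennreal (pw a b t (l - k))))"
  proof (intro CS_mono)
    fix k
    have "pw a b t k * pw a b t (l - k) \<le> 2 powr t * pw a b t l * (pw a b t k + pw a b t (l - k))"
      unfolding pw_def by (rule powr_neg_split) (use t in simp)
    then have "ennreal (pw a b t k * pw a b t (l - k)) \<le> ennreal (2 powr t * pw a b t l * (pw a b t k + pw a b t (l - k)))"
      by (rule ennreal_leI)
    also have "\<dots> = ennreal (2 powr t * pw a b t l) * (ennreal (pw a b t k) + ennreal (pw a b t (l - k)))"
      using pw_nonneg by (simp add: ennreal_mult ennreal_plus)
    finally show "ennreal (pw a b t k * pw a b t (l - k)) \<le> ennreal (2 powr t * pw a b t l) * (ennreal (pw a b t k) + ennreal (pw a b t (l - k)))" .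
  qed
  also have "\<dots> = ennreal (2 powr t * pw a b t l) * (2 * CS (\<lambda>k. ennreal (pw a b t k)))"
    by (simp add: CS_add CS_cmult CS_reflect[of "\<lambda>k. ennreal (pw a b t k)"] mult_2)
  also have "\<dots> \<le> ennreal (2 powr t * pw a b t l) * (2 * ennreal (Sjr a b))"
  proof -
    have "CS (\<lambda>k. ennreal (pw a b t k)) \<le> Sj a b"
      unfolding Sj_def by (intro CS_mono ennreal_leI pw_le_sq t)
    then show ?thesis using Sj_eq[OF ab] by (intro mult_left_mono) auto
  qed
  also have "\<dots> = ennreal (2 powr t * pw a b t l) * ennreal (2 * Sjr a b)"
    using Sjr_nonneg by (simp add: ennreal_mult)
  also have "\<dots> = ennreal (Cc a b t * pw a b t l)"
    by (subst ennreal_mult[symmetric]) (auto simp: Cc_def mult_ac Sjr_nonneg pw_nonneg)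
  finally show ?thesis .
qed

lemma conv_pw:
  fixes u v :: "int \<Rightarrow> complex"
  assumes ab: "a < b" and t: "2 \<le> t" and al: "0 \<le> \<alpha>" "0 \<le> \<beta>"
    and hu: "\<And>k. norm (u k) \<le> \<alpha> * pw a b t k" and hv: "\<And>k. norm (v k) \<le> \<beta> * pw a b t k"
  shows "norm (conv u v l) \<le> \<alpha> * \<beta> * Cc a b t * pw a b t l"
    and "(\<lambda>k. u k * v (l - k)) summable_on UNIV"
proof -
  have hu': "\<And>k. ennreal (norm (u k)) \<le> ennreal (\<alpha> * pw a b t k)" using hu by (simp add: ennreal_leI)
  have hv': "\<And>k. ennreal (norm (v k)) \<le> ennreal (\<beta> * pw a b t k)" using hv by (simp add: ennreal_leI)
  have "cv (\<lambda>k. ennreal (\<alpha> * pw a b t k)) (\<lambda>k. ennreal (\<beta> * pw a b t k)) l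
      = ennreal (\<alpha> * \<beta>) * CS (\<lambda>k. ennreal (pw a b t k * pw a b t (l - k)))"
    unfolding cv_def using al pw_nonneg
    by (simp add: CS_cmult[symmetric] ennreal_mult[symmetric] mult_ac del: ennreal_mult)
  also have "\<dots> \<le> ennreal (\<alpha> * \<beta>) * ennreal (Cc a b t * pw a b t l)"
    by (intro mult_left_mono pw_conv ab t) simp
  also have "\<dots> = ennreal (\<alpha> * \<beta> * Cc a b t * pw a b t l)"
    using al Cc_nonneg pw_nonneg by (simp add: ennreal_mult[symmetric] mult_ac del: ennreal_mult)
  finally have cvb: "cv (\<lambda>k. ennreal (\<alpha> * pw a b t k)) (\<lambda>k. ennreal (\<beta> * pw a b t k)) l \<le> ennreal (\<alpha> * \<beta> * Cc a b t * pw a b t l)" .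
  have "ennreal (norm (conv u v l)) \<le> ennreal (\<alpha> * \<beta> * Cc a b t * pw a b t l)"
    using conv_bound[OF hu' hv', where l=l] cvb by (rule order_trans)
  then show "norm (conv u v l) \<le> \<alpha> * \<beta> * Cc a b t * pw a b t l"
    using al Cc_nonneg pw_nonneg by (simp add: ennreal_le_iff)
  show "(\<lambda>k. u k * v (l - k)) summable_on UNIV"
    by (rule conv_summable[OF hu' hv']) (use cvb in \<open>simp add: le_less_trans\<close>)
qed

lemma cp_pw:
  fixes u :: "int \<Rightarrow> complex"
  assumes ab: "a < b" and t: "2 \<le> t" and al: "0 \<le> \<alpha>"
    and hu: "\<And>k. norm (u k) \<le> \<alpha> * pw a b t k"
  shows "norm (conv_pow u n l) \<le> (\<alpha> * Cc a b t) ^ n * pw a b t l"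
proof (induction n arbitrary: l)
  case 0
  show ?case using pw_nonneg[of a b t l] by (simp add: pw_0)
next
  case (Suc n)
  have "norm (conv u (conv_pow u n) l) \<le> \<alpha> * (\<alpha> * Cc a b t) ^ n * Cc a b t * pw a b t l"
    by (rule conv_pw(1)[OF ab t al _ hu]) (use Suc.IH Cc_nonneg al in auto)
  then show ?case by (simp add: mult_ac)
qed

fun Dn :: "real \<Rightarrow> real \<Rightarrow> nat \<Rightarrow> real" where
  "Dn \<alpha> C 0 = 0"
| "Dn \<alpha> C (Suc n) = C * ((\<alpha> * C) ^ n + \<alpha> * Dn \<alpha> C n)"

lemma Dn_nonneg: "0 \<le> \<alpha> \<Longrightarrow> 0 \<le> C \<Longrightarrow> 0 \<le> Dn \<alpha> C n"
  by (induction n) auto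

lemma cp_lip:
  fixes x y :: "int \<Rightarrow> complex"
  assumes ab: "a < b" and t: "2 \<le> t" and al: "0 \<le> \<alpha>" and e: "0 \<le> e"
    and hx: "\<And>k. norm (x k) \<le> \<alpha> * pw a b t k" and hy: "\<And>k. norm (y k) \<le> \<alpha> * pw a b t k"
    and hd: "\<And>k. norm (x k - y k) \<le> e * pw a b t k"
  shows "norm (conv_pow x n l - conv_pow y n l) \<le> e * Dn \<alpha> (Cc a b t) n * pw a b t l"
proof (induction n arbitrary: l)
  case 0
  show ?case by simp
next
  case (Suc n)
  let ?C = "Cc a b t"
  have C0: "0 \<le> ?C" by (rule Cc_nonneg)
  have bx: "\<And>l. norm (conv_pow x n l) \<le> (\<alpha> * ?C) ^ n * pw a b t l" by (rule cp_pw[OF ab t al hx])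
  have s1: "(\<lambda>k. x k * conv_pow x n (l - k)) summable_on UNIV"
    by (rule conv_pw(2)[OF ab t al _ hx bx]) (use al C0 in simp)
  have s2: "(\<lambda>k. y k * conv_pow y n (l - k)) summable_on UNIV"
    by (rule conv_pw(2)[OF ab t al _ hy cp_pw[OF ab t al hy]]) (use al C0 in simp)
  have "conv x (conv_pow x n) l - conv y (conv_pow y n) l
      = infsum (\<lambda>k. x k * conv_pow x n (l - k) - y k * conv_pow y n (l - k)) UNIV"
    unfolding conv_def by (rule infsum_diff[OF s1 s2, symmetric])
  also have "\<dots> = infsum (\<lambda>k. (x k - y k) * conv_pow x n (l - k) + y k * (conv_pow x n (l - k) - conv_pow y n (l - k))) UNIV"
    by (simp add: first_diff_identity)
  finally have eq: "conv x (conv_pow x n) l - conv y (conv_pow y n) l = \<dots>" .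
  define Q where "Q = e * (\<alpha> * ?C) ^ n + \<alpha> * (e * Dn \<alpha> ?C n)"
  have Q0: "0 \<le> Q" unfolding Q_def using al e C0 Dn_nonneg[OF al C0, of n] by simp
  have "ennreal (norm (infsum (\<lambda>k. (x k - y k) * conv_pow x n (l - k) + y k * (conv_pow x n (l - k) - conv_pow y n (l - k))) UNIV))
      \<le> CS (\<lambda>k. ennreal Q * ennreal (pw a b t k * pw a b t (l - k)))"
  proof (rule norm_infsum_CS)
    fix k
    have "norm ((x k - y k) * conv_pow x n (l - k) + y k * (conv_pow x n (l - k) - conv_pow y n (l - k)))
        \<le> norm (x k - y k) * norm (conv_pow x n (l - k)) + norm (y k) * norm (conv_pow x n (l - k) - conv_pow y n (l - k))"
      by (metis norm_mult norm_triangle_ineq)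
    also have "\<dots> \<le> (e * pw a b t k) * ((\<alpha> * ?C) ^ n * pw a b t (l - k)) + (\<alpha> * pw a b t k) * (e * Dn \<alpha> ?C n * pw a b t (l - k))"
      by (intro add_mono mult_mono hd bx hy Suc.IH) (use al e C0 pw_nonneg in auto)
    also have "\<dots> = Q * (pw a b t k * pw a b t (l - k))"
      unfolding Q_def by (simp add: algebra_simps)
    finally show "ennreal (norm ((x k - y k) * conv_pow x n (l - k) + y k * (conv_pow x n (l - k) - conv_pow y n (l - k))))
        \<le> ennreal Q * ennreal (pw a b t k * pw a b t (l - k))"
      using Q0 pw_nonneg by (simp add: ennreal_mult[symmetric] ennreal_leI del: ennreal_mult)
  qed
  also have "\<dots> = ennreal Q * CS (\<lambda>k. ennreal (pw a b t k * pw a b t (l - k)))"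
    by (rule CS_cmult)
  also have "\<dots> \<le> ennreal Q * ennreal (?C * pw a b t l)"
    by (intro mult_left_mono pw_conv ab t) simp
  also have "\<dots> = ennreal (e * Dn \<alpha> ?C (Suc n) * pw a b t l)"
    using Q0 C0 pw_nonneg by (simp add: ennreal_mult[symmetric] Q_def algebra_simps del: ennreal_mult)
  finally have "ennreal (norm (conv x (conv_pow x n) l - conv y (conv_pow y n) l)) \<le> ennreal (e * Dn \<alpha> ?C (Suc n) * pw a b t l)"
    using eq by simp
  then show ?case
    using e Dn_nonneg[OF al C0, of "Suc n"] pw_nonneg by (simp add: ennreal_le_iff)
qed

lemma mvt_bound:
  fixes f :: "real \<Rightarrow> 'a::real_normed_vector"
  assumes ab: "a \<le> b"
    and d: "\<And>x. x \<in> {a..b} \<Longrightarrow> (f has_vector_derivative f' x) (at x within {a..b})"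
    and B: "\<And>x. x \<in> {a..b} \<Longrightarrow> norm (f' x) \<le> B"
  shows "norm (f b - f a) \<le> B * (b - a)"
proof -
  have "norm (f b - f a) \<le> B * norm (b - a)"
  proof (rule differentiable_bound[where S="{a..b}" and f'="\<lambda>x h. h *\<^sub>R f' x"])
    show "convex {a..b}" by simp
    show "(f has_derivative (\<lambda>h. h *\<^sub>R f' x)) (at x within {a..b})" if "x \<in> {a..b}" for x
      using d[OF that] unfolding has_vector_derivative_def .
    show "onorm (\<lambda>h. h *\<^sub>R f' x) \<le> B" if "x \<in> {a..b}" for x
    proof -
      have "onorm (\<lambda>h::real. h *\<^sub>R f' x) = onorm (\<lambda>h::real. h) * norm (f' x)"
        by (rule onorm_scaleR_left) (rule bounded_linear_ident)
      also have "\<dots> = norm (f' x)" by (simp add: onorm_id)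
      finally show ?thesis using B[OF that] by simp
    qed
  qed (use ab in auto)
  then show ?thesis using ab by simp
qed

lemma expi_vd:
  "((\<lambda>x. exp (\<i> * complex_of_real (x * L))) has_vector_derivative
     (\<i> * complex_of_real L * exp (\<i> * complex_of_real (x * L)))) (at x within S)"
proof -
  have 1: "((\<lambda>x. \<i> * complex_of_real (x * L)) has_vector_derivative (\<i> * complex_of_real L)) (at x within S)"
    by (intro derivative_eq_intros) auto
  have "((exp \<circ> (\<lambda>x. \<i> * complex_of_real (x * L))) has_vector_derivative
     (\<i> * complex_of_real L * exp (\<i> * complex_of_real (x * L)))) (at x within S)"
    by (rule field_vector_diff_chain_within[OF 1]) (rule DERIV_exp[THEN has_field_derivative_at_within])
  then show ?thesis by (simp add: o_def)
qed

lemma norm_expi_sub1: "norm (exp (\<i> * complex_of_real \<theta>) - 1) \<le> \<bar>\<theta>\<bar>"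
proof -
  let ?f = "\<lambda>x. exp (\<i> * complex_of_real (x * 1))"
  have d: "\<And>x. (?f has_vector_derivative (\<i> * complex_of_real 1 * ?f x)) (at x within S)" for S
    by (rule expi_vd)
  have n: "norm (\<i> * complex_of_real 1 * ?f x) \<le> 1" for x by (simp add: norm_mult)
  show ?thesis
  proof (cases "0 \<le> \<theta>")
    case True
    have "norm (?f \<theta> - ?f 0) \<le> 1 * (\<theta> - 0)"
      by (rule mvt_bound[OF True d n])
    then show ?thesis using True by simp
  next
    case False
    have "norm (?f 0 - ?f \<theta>) \<le> 1 * (0 - \<theta>)"
      by (rule mvt_bound[OF _ d n]) (use False in simp)
    then show ?thesis using False by (simp add: norm_minus_commute)
  qed
qed

lemma norm_expi_diff: "norm (exp (\<i> * complex_of_real \<theta>) - exp (- (\<i> * complex_of_real \<theta>))) \<le> 2 * \<bar>\<theta>\<bar>"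
proof -
  have "exp (\<i> * complex_of_real \<theta>) - exp (- (\<i> * complex_of_real \<theta>))
      = (exp (\<i> * complex_of_real \<theta>) - 1) - (exp (\<i> * complex_of_real (- \<theta>)) - 1)"
    by simp
  also have "norm \<dots> \<le> norm (exp (\<i> * complex_of_real \<theta>) - 1) + norm (exp (\<i> * complex_of_real (- \<theta>)) - 1)"
    by (rule norm_triangle_ineq4)
  also have "\<dots> \<le> \<bar>\<theta>\<bar> + \<bar>- \<theta>\<bar>" by (intro add_mono norm_expi_sub1)
  finally show ?thesis by simp
qed

lemma norm_expi_2diff: "norm (exp (\<i> * complex_of_real \<theta>) + exp (- (\<i> * complex_of_real \<theta>)) - 2) \<le> \<theta>\<^sup>2"
proof -
  have "exp (\<i> * complex_of_real \<theta>) + exp (- (\<i> * complex_of_real \<theta>)) = 2 * cos (complex_of_real \<theta>)"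
    by (simp add: cos_exp_eq)
  also have "\<dots> = complex_of_real (2 * cos \<theta>)" by (simp add: cos_of_real)
  finally have e: "exp (\<i> * complex_of_real \<theta>) + exp (- (\<i> * complex_of_real \<theta>)) - 2 = complex_of_real (2 * cos \<theta> - 2)"
    by simp
  have c: "cos \<theta> = 1 - 2 * (sin (\<theta> / 2))\<^sup>2"
    using cos_double_sin[of "\<theta> / 2"] by simp
  have "\<bar>sin (\<theta> / 2)\<bar> \<le> \<bar>\<theta> / 2\<bar>" by (rule abs_sin_x_le_abs_x)
  then have "(sin (\<theta> / 2))\<^sup>2 \<le> (\<theta> / 2)\<^sup>2" by (metis abs_le_square_iff)
  then have "\<bar>2 * cos \<theta> - 2\<bar> \<le> \<theta>\<^sup>2" unfolding c by (simp add: power_divide)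
  then show ?thesis unfolding e by (simp only: norm_of_real)
qed

definition ex :: "real \<Rightarrow> complex" where "ex \<theta> = exp (\<i> * complex_of_real \<theta>)"

lemma ex_add: "ex (x + y) = ex x * ex y"
  unfolding ex_def by (simp add: distrib_left exp_add)

lemma ex_0[simp]: "ex 0 = 1" unfolding ex_def by simp

lemma norm_ex[simp]: "norm (ex \<theta>) = 1" unfolding ex_def by simp

lemma cnj_ex: "cnj (ex \<theta>) = ex (- \<theta>)"
  unfolding ex_def by (simp add: exp_cnj)

lemma ex_neg: "ex (- \<theta>) * ex \<theta> = 1"
  using ex_add[of "- \<theta>" \<theta>] by simp

lemma ex_vd: "((\<lambda>x. ex (x * L + c)) has_vector_derivative (\<i> * complex_of_real L * ex (x * L + c))) (at x within S)"
proof -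
  have "((\<lambda>x. exp (\<i> * complex_of_real (x * L)) * ex c) has_vector_derivative
     (\<i> * complex_of_real L * exp (\<i> * complex_of_real (x * L)) * ex c)) (at x within S)"
    by (intro has_vector_derivative_mult_left expi_vd)
  then show ?thesis unfolding ex_add by (simp add: ex_def mult_ac)
qed

lemma ex_sub1: "norm (ex \<theta> - 1) \<le> \<bar>\<theta>\<bar>"
  unfolding ex_def by (rule norm_expi_sub1)

lemma ex_diff: "norm (ex \<theta> - ex (- \<theta>)) \<le> 2 * \<bar>\<theta>\<bar>"
  unfolding ex_def using norm_expi_diff by simp

lemma ex_2diff: "norm (ex \<theta> + ex (- \<theta>) - 2) \<le> \<theta>\<^sup>2"
  unfolding ex_def using norm_expi_2diff by simp

lemma phiT_ex: "phiT a b t z l = ex (t * jbr a b l) * z l"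
  unfolding phiT_def ex_def by simp

lemma w_deriv:
  assumes sol: "is_solution a b p eps T psi" and sub: "{t0..t1} \<subseteq> {0..T}" and r: "r \<in> {t0..t1}"
  shows "((\<lambda>r. ex (r * (- jbr a b l) + c) * psi r l) has_vector_derivative
      (ex (r * (- jbr a b l) + c) * (\<i> * complex_of_real (eps ^ p / jbr a b l) * Gnl p (psi r) l))) (at r within {t0..t1})"
proof -
  let ?L = "jbr a b l"
  have "((\<lambda>t'. psi t' l) has_vector_derivative
           (\<i> * (complex_of_real ?L * psi r l + complex_of_real (eps ^ p / ?L) * Gnl p (psi r) l))) (at r within {0..T})"
    using sol r sub unfolding is_solution_def by blast
  then have dpsi: "((\<lambda>t'. psi t' l) has_vector_derivative
           (\<i> * (complex_of_real ?L * psi r l + complex_of_real (eps ^ p / ?L) * Gnl p (psi r) l))) (at r within {t0..t1})"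
    using sub by (rule has_vector_derivative_within_subset)
  have "((\<lambda>r. ex (r * (- ?L) + c) * psi r l) has_vector_derivative
      (ex (r * (- ?L) + c) * (\<i> * (complex_of_real ?L * psi r l + complex_of_real (eps ^ p / ?L) * Gnl p (psi r) l))
       + \<i> * complex_of_real (- ?L) * ex (r * (- ?L) + c) * psi r l)) (at r within {t0..t1})"
    by (rule has_vector_derivative_mult[OF ex_vd dpsi])
  moreover have "ex (r * (- ?L) + c) * (\<i> * (complex_of_real ?L * psi r l + complex_of_real (eps ^ p / ?L) * Gnl p (psi r) l))
       + \<i> * complex_of_real (- ?L) * ex (r * (- ?L) + c) * psi r l
     = ex (r * (- ?L) + c) * (\<i> * complex_of_real (eps ^ p / ?L) * Gnl p (psi r) l)"
    by (simp add: algebra_simps)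
  ultimately show ?thesis by simp
qed

lemma re_diff_bound:
  assumes sol: "is_solution a b p eps T psi" and tn: "0 \<le> tn" and sg: "0 \<le> \<sigma>" "tn + \<sigma> \<le> T"
    and Gb: "\<And>r k. r \<in> {0..T} \<Longrightarrow> norm (Gnl p (psi r) k) \<le> P * pw a b t k" and eps: "0 < eps"
  shows "norm (re_part (psi (tn + \<sigma>)) k - re_part (phiT a b \<sigma> (psi tn)) k) \<le> eps ^ p * \<sigma>\<^sup>2 * P * pw a b t k"
proof -
  define L where "L = jbr a b k"
  have L0: "0 < L" unfolding L_def by (rule jbr_pos)
  have Lneg: "jbr a b (- k) = L" unfolding L_def by (rule jbr_neg)
  define c0 where "c0 = tn * L"
  define W where "W m r = ex (r * (- L) + c0) * psi r m" for m r
  define Es where "Es = ex (\<sigma> * L)"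
  define \<kappa> where "\<kappa> = \<i> * complex_of_real (eps ^ p / L)"
  define \<Theta> where "\<Theta> r = Es * (W k r - W k tn) + cnj (Es * (W (- k) r - W (- k) tn))" for r
  have sub: "{tn..tn + \<sigma>} \<subseteq> {0..T}" using tn sg by auto
  have i: "psi (tn + \<sigma>) m = Es * W m (tn + \<sigma>)" for m
  proof -
    have "Es * ex ((tn + \<sigma>) * (- L) + c0) = ex (\<sigma> * L + ((tn + \<sigma>) * (- L) + c0))"
      unfolding Es_def by (simp add: ex_add)
    also have "\<sigma> * L + ((tn + \<sigma>) * (- L) + c0) = 0" unfolding c0_def by (simp add: algebra_simps)
    finally show ?thesis unfolding W_def by (simp add: mult.assoc[symmetric])
  qed
  have ii: "W m tn = psi tn m" for m unfolding W_def c0_def by simp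
  have iii: "phiT a b \<sigma> (psi tn) k = Es * psi tn k" "phiT a b \<sigma> (psi tn) (- k) = Es * psi tn (- k)"
    unfolding phiT_ex Es_def L_def by (simp_all add: jbr_neg)
  have eq: "re_part (psi (tn + \<sigma>)) k - re_part (phiT a b \<sigma> (psi tn)) k = \<Theta> (tn + \<sigma>) / 2"
    unfolding re_part_def \<Theta>_def iii i[of k] i[of "- k"] ii by (simp add: algebra_simps diff_divide_distrib)
  have dW: "((\<lambda>r. W m r) has_vector_derivative (ex (r * (- L) + c0) * (\<kappa> * Gnl p (psi r) m))) (at r within {tn..tn + \<sigma>})"
    if "jbr a b m = L" "r \<in> {tn..tn + \<sigma>}" for m r
    using w_deriv[OF sol sub that(2), of m c0] unfolding W_def \<kappa>_def that(1) .
  define \<Theta>' where "\<Theta>' r = Es * (ex (r * (- L) + c0) * (\<kappa> * Gnl p (psi r) k))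
      + cnj (Es * (ex (r * (- L) + c0) * (\<kappa> * Gnl p (psi r) (- k))))" for r
  have dT: "(\<Theta> has_vector_derivative \<Theta>' r) (at r within {tn..tn + \<sigma>})" if "r \<in> {tn..tn + \<sigma>}" for r
  proof -
    have d1: "((\<lambda>r. Es * (W k r - W k tn)) has_vector_derivative Es * (ex (r * (- L) + c0) * (\<kappa> * Gnl p (psi r) k))) (at r within {tn..tn + \<sigma>})"
      using dW[of k r] that unfolding L_def by (auto intro!: derivative_eq_intros)
    have d2: "((\<lambda>r. Es * (W (- k) r - W (- k) tn)) has_vector_derivative Es * (ex (r * (- L) + c0) * (\<kappa> * Gnl p (psi r) (- k)))) (at r within {tn..tn + \<sigma>})"
      using dW[of "- k" r] that Lneg by (auto intro!: derivative_eq_intros)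
    show ?thesis unfolding \<Theta>_def \<Theta>'_def
      by (intro has_vector_derivative_add d1 has_vector_derivative_cnj d2)
  qed
  have bT: "norm (\<Theta>' r) \<le> 2 * eps ^ p * \<sigma> * P * pw a b t k" if r: "r \<in> {tn..tn + \<sigma>}" for r
  proof -
    define \<theta> where "\<theta> = \<sigma> * L + (r * (- L) + c0)"
    have EX: "Es * ex (r * (- L) + c0) = ex \<theta>" unfolding Es_def \<theta>_def by (simp add: ex_add)
    have ck: "cnj \<kappa> = - \<kappa>" unfolding \<kappa>_def by simp
    have "\<Theta>' r = \<kappa> * Gnl p (psi r) k * (ex \<theta> - ex (- \<theta>))"
      unfolding \<Theta>'_def Gnl_herm mult.assoc[symmetric] EX
      by (simp add: ck cnj_ex algebra_simps)
    moreover have nk: "norm \<kappa> = eps ^ p / L"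
      unfolding \<kappa>_def norm_mult norm_of_real using eps L0 by simp
    ultimately have eqn: "norm (\<Theta>' r) = (eps ^ p / L) * norm (Gnl p (psi r) k) * norm (ex \<theta> - ex (- \<theta>))"
      by (simp only: norm_mult)
    have Ppos: "0 \<le> P * pw a b t k"
      using Gb[of r k] r sub norm_ge_zero[of "Gnl p (psi r) k"] by (meson order_trans subsetD)
    have th: "\<bar>\<theta>\<bar> \<le> \<sigma> * L"
    proof -
      have te: "\<theta> = L * (\<sigma> + tn - r)" unfolding \<theta>_def c0_def by (simp add: algebra_simps)
      have "0 \<le> \<sigma> + tn - r" "\<sigma> + tn - r \<le> \<sigma>" using r sg by auto
      then have "0 \<le> \<theta>" "\<theta> \<le> L * \<sigma>" unfolding te using L0 by (auto intro: mult_left_mono)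
      then show ?thesis by (simp add: mult.commute)
    qed
    have "(eps ^ p / L) * norm (Gnl p (psi r) k) * norm (ex \<theta> - ex (- \<theta>)) \<le> (eps ^ p / L) * (P * pw a b t k) * (2 * \<bar>\<theta>\<bar>)"
      using Gb[of r k] r sub eps L0 Ppos by (intro mult_mono mult_left_mono ex_diff) auto
    also have "\<dots> \<le> (eps ^ p / L) * (P * pw a b t k) * (2 * (\<sigma> * L))"
      using eps L0 Ppos th by (intro mult_left_mono) auto
    also have "\<dots> = 2 * eps ^ p * \<sigma> * P * pw a b t k" using L0 by (simp add: field_simps)
    finally show ?thesis using eqn by simp
  qed
  have "norm (\<Theta> (tn + \<sigma>) - \<Theta> tn) \<le> (2 * eps ^ p * \<sigma> * P * pw a b t k) * (tn + \<sigma> - tn)"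
    by (rule mvt_bound[OF _ dT bT]) (use sg in auto)
  moreover have "\<Theta> tn = 0" unfolding \<Theta>_def by simp
  ultimately have "norm (\<Theta> (tn + \<sigma>)) \<le> 2 * eps ^ p * \<sigma>\<^sup>2 * P * pw a b t k"
    by (simp add: power2_eq_square mult_ac)
  then show ?thesis unfolding eq by (simp add: norm_divide)
qed

lemma re_flow: "re_part (phiT a b \<sigma> z) k = (ex (\<sigma> * jbr a b k) * z k + cnj (ex (\<sigma> * jbr a b k) * z (- k))) / 2"
  unfolding re_part_def phiT_ex by (simp add: jbr_neg)

lemma ex_shift_diff: "norm (ex ((c + u) * L) - ex (c * L)) \<le> \<bar>u\<bar> * \<bar>L\<bar>"
proof -
  have "ex ((c + u) * L) - ex (c * L) = ex (c * L) * (ex (u * L) - 1)"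
    by (simp add: distrib_right ex_add algebra_simps)
  then have "norm (ex ((c + u) * L) - ex (c * L)) = norm (ex (u * L) - 1)" by (simp add: norm_mult)
  also have "\<dots> \<le> \<bar>u * L\<bar>" by (rule ex_sub1)
  finally show ?thesis by (simp add: abs_mult)
qed

lemma ex_shift_diff': "norm (ex ((c - u) * L) - ex (c * L)) \<le> \<bar>u\<bar> * \<bar>L\<bar>"
  using ex_shift_diff[of c "- u" L] by simp

lemma ex_shift_2diff: "norm (ex ((c + u) * L) + ex ((c - u) * L) - 2 * ex (c * L)) \<le> u\<^sup>2 * L\<^sup>2"
proof -
  have "ex ((c + u) * L) + ex ((c - u) * L) - 2 * ex (c * L) = ex (c * L) * (ex (u * L) + ex (- (u * L)) - 2)"
    by (simp add: algebra_simps ex_add[symmetric])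
  then have "norm (ex ((c + u) * L) + ex ((c - u) * L) - 2 * ex (c * L)) = norm (ex (u * L) + ex (- (u * L)) - 2)"
    by (simp add: norm_mult)
  also have "\<dots> \<le> (u * L)\<^sup>2" by (rule ex_2diff)
  finally show ?thesis by (simp add: power_mult_distrib)
qed

lemma enn_half_le: "0 \<le> q \<Longrightarrow> ennreal (q / 2) \<le> ennreal q"
  by (intro ennreal_leI) auto

lemma Wt1: "Wt a b 1 x k = ennreal (jbr a b k) * x k"
  unfolding Wt_def by (simp add: less_imp_le[OF jbr_pos])

lemma Wt2: "Wt a b 2 x k = ennreal ((jbr a b k)\<^sup>2) * x k"
  unfolding Wt_def using powr_realpow[OF jbr_pos, of a b k 2] by simp

lemma tri_cnj: "norm (d * q + cnj (d * q')) \<le> norm d * (norm q + norm (q'::complex))"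
proof -
  have "norm (d * q + cnj (d * q')) \<le> norm (d * q) + norm (cnj (d * q'))" by (rule norm_triangle_ineq)
  also have "\<dots> = norm d * (norm q + norm q')" by (simp add: norm_mult distrib_left)
  finally show ?thesis .
qed

lemma h_2diff:
  fixes \<psi>0 :: "int \<Rightarrow> complex" and a b c u :: real and p :: nat and l :: int
  assumes fin: "\<And>m l. Am (\<lambda>k. ennreal (norm (\<psi>0 k) + norm (\<psi>0 (- k)))) m l < \<infinity>"
  defines "xa \<equiv> \<lambda>k. ennreal (norm (\<psi>0 k) + norm (\<psi>0 (- k)))"
  defines "H \<equiv> \<lambda>\<sigma>. ex (\<sigma> * (- jbr a b l)) * Gnl p (phiT a b \<sigma> \<psi>0) l"
  shows "ennreal (norm (H (c + u) + H (c - u) - 2 * H c)) \<le> ennreal (u\<^sup>2) *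
     (Wt a b 2 (Am xa (p + 1)) l + Cm xa (Wt a b 1 xa) (Wt a b 2 xa) (p + 1) l + 2 * Wt a b 1 (Bm xa (Wt a b 1 xa) (p + 1)) l)"
proof -
  define R where "R \<sigma> = re_part (phiT a b \<sigma> \<psi>0)" for \<sigma>
  have Rk: "R \<sigma> k = (ex (\<sigma> * jbr a b k) * \<psi>0 k + cnj (ex (\<sigma> * jbr a b k) * \<psi>0 (- k))) / 2" for \<sigma> k
    unfolding R_def by (rule re_flow)
  have nq: "0 \<le> norm (\<psi>0 k) + norm (\<psi>0 (- k))" for k by simp
  have hA: "ennreal (norm (R \<sigma> k)) \<le> xa k" for \<sigma> k
  proof -
    have "norm (R \<sigma> k) \<le> (norm (\<psi>0 k) + norm (\<psi>0 (- k))) / 2"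
      unfolding Rk norm_divide using tri_cnj[of "ex (\<sigma> * jbr a b k)" "\<psi>0 k" "\<psi>0 (- k)"] by simp
    then show ?thesis unfolding xa_def using enn_half_le[OF nq] by (meson ennreal_leI order_trans)
  qed
  have hB: "ennreal (norm (R (c + v) k - R c k)) \<le> ennreal \<bar>v\<bar> * Wt a b 1 xa k" if "v = u \<or> v = - u" for v k
  proof -
    let ?d = "ex ((c + v) * jbr a b k) - ex (c * jbr a b k)"
    have e: "R (c + v) k - R c k = (?d * \<psi>0 k + cnj (?d * \<psi>0 (- k))) / 2"
      unfolding Rk by (simp add: algebra_simps diff_divide_distrib)
    have nd: "norm ?d \<le> \<bar>v\<bar> * jbr a b k" using ex_shift_diff[of c v "jbr a b k"] by simp
    have "norm (R (c + v) k - R c k) \<le> norm ?d * (norm (\<psi>0 k) + norm (\<psi>0 (- k))) / 2"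
      unfolding e norm_divide using tri_cnj[of ?d "\<psi>0 k" "\<psi>0 (- k)"] by simp
    also have "\<dots> \<le> norm ?d * (norm (\<psi>0 k) + norm (\<psi>0 (- k)))" by simp
    also have "\<dots> \<le> \<bar>v\<bar> * jbr a b k * (norm (\<psi>0 k) + norm (\<psi>0 (- k)))"
      using nd by (intro mult_right_mono) auto
    finally have fr: "norm (R (c + v) k - R c k) \<le> \<bar>v\<bar> * jbr a b k * (norm (\<psi>0 k) + norm (\<psi>0 (- k)))" .
    have "ennreal (norm (R (c + v) k - R c k)) \<le> ennreal (\<bar>v\<bar> * jbr a b k * (norm (\<psi>0 k) + norm (\<psi>0 (- k))))" by (rule ennreal_leI[OF fr])
    also have "\<dots> = ennreal \<bar>v\<bar> * Wt a b 1 xa k"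
      unfolding Wt1 xa_def by (simp add: ennreal_mult ennreal_plus mult.assoc less_imp_le[OF jbr_pos])
    finally show ?thesis .
  qed
  have hBp: "ennreal (norm (R (c + u) k - R c k)) \<le> ennreal \<bar>u\<bar> * Wt a b 1 xa k" for k using hB[of u k] by simp
  have hBm: "ennreal (norm (R (c - u) k - R c k)) \<le> ennreal \<bar>u\<bar> * Wt a b 1 xa k" for k using hB[of "- u" k] by simp
  have hC: "ennreal (norm (R (c + u) k + R (c - u) k - 2 * R c k)) \<le> ennreal (u\<^sup>2) * Wt a b 2 xa k" for k
  proof -
    let ?d = "ex ((c + u) * jbr a b k) + ex ((c - u) * jbr a b k) - 2 * ex (c * jbr a b k)"
    have e: "R (c + u) k + R (c - u) k - 2 * R c k = (?d * \<psi>0 k + cnj (?d * \<psi>0 (- k))) / 2"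
      unfolding Rk by (simp add: algebra_simps add_divide_distrib diff_divide_distrib)
    have nd: "norm ?d \<le> u\<^sup>2 * (jbr a b k)\<^sup>2" by (rule ex_shift_2diff)
    have "norm (R (c + u) k + R (c - u) k - 2 * R c k) \<le> norm ?d * (norm (\<psi>0 k) + norm (\<psi>0 (- k))) / 2"
      unfolding e norm_divide using tri_cnj[of ?d "\<psi>0 k" "\<psi>0 (- k)"] by simp
    also have "\<dots> \<le> norm ?d * (norm (\<psi>0 k) + norm (\<psi>0 (- k)))" by simp
    also have "\<dots> \<le> u\<^sup>2 * (jbr a b k)\<^sup>2 * (norm (\<psi>0 k) + norm (\<psi>0 (- k)))"
      using nd by (intro mult_right_mono) auto
    finally have fr: "norm (R (c + u) k + R (c - u) k - 2 * R c k) \<le> u\<^sup>2 * (jbr a b k)\<^sup>2 * (norm (\<psi>0 k) + norm (\<psi>0 (- k)))" .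
    have "ennreal (norm (R (c + u) k + R (c - u) k - 2 * R c k)) \<le> ennreal (u\<^sup>2 * (jbr a b k)\<^sup>2 * (norm (\<psi>0 k) + norm (\<psi>0 (- k))))" by (rule ennreal_leI[OF fr])
    also have "\<dots> = ennreal (u\<^sup>2) * Wt a b 2 xa k"
      unfolding Wt2 xa_def by (simp add: ennreal_mult ennreal_plus mult.assoc less_imp_le[OF jbr_pos])
    finally show ?thesis .
  qed
  have fin': "\<And>m l. Am xa m l < \<infinity>" using fin unfolding xa_def .
  have hA': "\<And>\<sigma> k. \<sigma> \<in> {c - u, c, c + u} \<Longrightarrow> ennreal (norm (R \<sigma> k)) \<le> xa k" using hA by blast
  note DP = diffpow[of c u R xa "Wt a b 1 xa" "Wt a b 2 xa" "p + 1", OF hA' hBp hBm hC fin']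
  define G where "G \<sigma> = conv_pow (R \<sigma>) (p + 1) l" for \<sigma>
  define A where "A = Am xa (p + 1) l"
  define B where "B = Bm xa (Wt a b 1 xa) (p + 1) l"
  define C where "C = Cm xa (Wt a b 1 xa) (Wt a b 2 xa) (p + 1) l"
  have GA: "ennreal (norm (G c)) \<le> A" using DP unfolding G_def A_def by blast
  have GBp: "ennreal (norm (G (c + u) - G c)) \<le> ennreal \<bar>u\<bar> * B" using DP unfolding G_def B_def by blast
  have GBm: "ennreal (norm (G (c - u) - G c)) \<le> ennreal \<bar>u\<bar> * B" using DP unfolding G_def B_def by blast
  have GC: "ennreal (norm (G (c + u) + G (c - u) - 2 * G c)) \<le> ennreal (u\<^sup>2) * C" using DP unfolding G_def C_def by blast
  define L where "L = jbr a b l"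
  have L0: "0 < L" unfolding L_def by (rule jbr_pos)
  define E where "E \<sigma> = ex (\<sigma> * (- L))" for \<sigma>
  have HE: "H \<sigma> = E \<sigma> * G \<sigma>" for \<sigma>
    unfolding H_def E_def G_def L_def Gnl_def R_def by simp
  have E2: "norm (E (c + u) + E (c - u) - 2 * E c) \<le> u\<^sup>2 * L\<^sup>2"
    unfolding E_def using ex_shift_2diff[of c u "- L"] by simp
  have Ep: "norm (E (c + u) - E c) \<le> \<bar>u\<bar> * L" unfolding E_def using ex_shift_diff[of c u "- L"] L0 by simp
  have Em: "norm (E (c - u) - E c) \<le> \<bar>u\<bar> * L" unfolding E_def using ex_shift_diff'[of c u "- L"] L0 by simp
  have E0: "norm (E c) = 1" unfolding E_def by simp
  have "H (c + u) + H (c - u) - 2 * H c = (E (c + u) + E (c - u) - 2 * E c) * G c + E c * (G (c + u) + G (c - u) - 2 * G c)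
           + (E (c + u) - E c) * (G (c + u) - G c) + (E (c - u) - E c) * (G (c - u) - G c)"
    unfolding HE by (rule second_diff_identity)
  then have "ennreal (norm (H (c + u) + H (c - u) - 2 * H c))
      \<le> ennreal (norm (E (c + u) + E (c - u) - 2 * E c)) * ennreal (norm (G c)) + ennreal (norm (E c)) * ennreal (norm (G (c + u) + G (c - u) - 2 * G c))
        + ennreal (norm (E (c + u) - E c)) * ennreal (norm (G (c + u) - G c)) + ennreal (norm (E (c - u) - E c)) * ennreal (norm (G (c - u) - G c))"
    unfolding enorm_mult[symmetric] by (simp only: enorm_add4_le)
  also have "\<dots> \<le> ennreal (u\<^sup>2 * L\<^sup>2) * A + 1 * (ennreal (u\<^sup>2) * C) + ennreal (\<bar>u\<bar> * L) * (ennreal \<bar>u\<bar> * B) + ennreal (\<bar>u\<bar> * L) * (ennreal \<bar>u\<bar> * B)"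
    unfolding E0 by (intro add_mono mult_mono ennreal_leI E2 GA GC Ep Em GBp GBm) auto
  also have "\<dots> = ennreal (u\<^sup>2) * (ennreal (L\<^sup>2) * A + C + 2 * (ennreal L * B))"
  proof -
    have e1: "ennreal (u\<^sup>2 * L\<^sup>2) = ennreal (u\<^sup>2) * ennreal (L\<^sup>2)" by (rule ennreal_mult) auto
    have e2: "ennreal (\<bar>u\<bar> * L) * (ennreal \<bar>u\<bar> * B) = ennreal (u\<^sup>2) * (ennreal L * B)"
      using L0 by (simp add: ennreal_mult eabs_sq[symmetric] mult_ac)
    show ?thesis unfolding e1 e2 by (simp add: distrib_left mult_2 mult.assoc add.assoc)
  qed
  also have "\<dots> = ennreal (u\<^sup>2) * (Wt a b 2 (Am xa (p + 1)) l + Cm xa (Wt a b 1 xa) (Wt a b 2 xa) (p + 1) l + 2 * Wt a b 1 (Bm xa (Wt a b 1 xa) (p + 1)) l)"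
    unfolding Wt1 Wt2 A_def B_def C_def L_def by simp
  finally show ?thesis .
qed

lemma shift_deriv_p:
  assumes d: "\<And>r. r \<in> {t0..t1} \<Longrightarrow> (W has_vector_derivative W' r) (at r within {t0..t1})"
    and sub: "t0 \<le> x0" "x0 + c \<le> t1" and u: "u \<in> {0..c}"
  shows "((\<lambda>u. W (x0 + u)) has_vector_derivative W' (x0 + u)) (at u within {0..c})"
proof -
  have f: "((\<lambda>u. x0 + u) has_vector_derivative 1) (at u within {0..c})"
    by (auto intro!: derivative_eq_intros)
  have im: "(\<lambda>u. x0 + u) ` {0..c} \<subseteq> {t0..t1}" using sub by auto
  have g: "(W has_vector_derivative W' (x0 + u)) (at (x0 + u) within (\<lambda>u. x0 + u) ` {0..c})"
    by (rule has_vector_derivative_within_subset[OF d im]) (use u sub in auto)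
  show ?thesis using vector_diff_chain_within[OF f g] by (simp add: o_def)
qed

lemma shift_deriv_m:
  assumes d: "\<And>r. r \<in> {t0..t1} \<Longrightarrow> (W has_vector_derivative W' r) (at r within {t0..t1})"
    and sub: "t0 \<le> x0 - c" "x0 \<le> t1" and u: "u \<in> {0..c}"
  shows "((\<lambda>u. W (x0 - u)) has_vector_derivative - W' (x0 - u)) (at u within {0..c})"
proof -
  have f: "((\<lambda>u. x0 - u) has_vector_derivative -1) (at u within {0..c})"
    by (auto intro!: derivative_eq_intros)
  have im: "(\<lambda>u. x0 - u) ` {0..c} \<subseteq> {t0..t1}" using sub by auto
  have g: "(W has_vector_derivative W' (x0 - u)) (at (x0 - u) within (\<lambda>u. x0 - u) ` {0..c})"
    by (rule has_vector_derivative_within_subset[OF d im]) (use u sub in auto)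
  show ?thesis using vector_diff_chain_within[OF f g] by (simp add: o_def)
qed

lemma re_part_pw:
  assumes "\<And>k. norm (z k) \<le> \<alpha> * pw a b t k"
  shows "norm (re_part z k) \<le> \<alpha> * pw a b t k"
proof -
  have pwn: "pw a b t (- k) = pw a b t k" unfolding pw_def by (simp add: jbr_neg)
  have "norm (re_part z k) \<le> (norm (z k) + norm (z (- k))) / 2"
    unfolding re_part_def norm_divide by (simp add: norm_triangle_le)
  also have "\<dots> \<le> (\<alpha> * pw a b t k + \<alpha> * pw a b t k) / 2"
    using assms[of k] assms[of "- k"] pwn by (intro divide_right_mono add_mono) auto
  finally show ?thesis by simp
qed

lemma strang_mode:
  "strang a b p eps tau z l = ex (tau * jbr a b l) * z l
     + ex (tau / 2 * jbr a b l) * (complex_of_real (eps ^ p * tau) * (\<i> * Gnl p (phiT a b (tau / 2) z) l / complex_of_real (jbr a b l)))"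
proof -
  have "ex (tau / 2 * jbr a b l) * ex (tau / 2 * jbr a b l) = ex (tau * jbr a b l)"
    by (simp add: ex_add[symmetric])
  then show ?thesis
    unfolding strang_def phiV_def Fnl_def by (simp add: phiT_ex algebra_simps)
qed

lemma alg1: "(k::complex) * gp + k * gm - 2 * k * hc = k * ((hp + hm - 2 * hc) + (gp - hp) + (gm - hm))"
  by (simp add: algebra_simps)

lemma tri3: "norm ((x::complex) + y + z) \<le> norm x + norm y + norm z"
  by (meson add_mono norm_triangle_ineq order_refl order_trans)

lemma alg2: "L \<noteq> 0 \<Longrightarrow> complex_of_real tau * (\<i> * complex_of_real (e / L)) * X
    = complex_of_real (e * tau) * (\<i> * X / complex_of_real L)"
  by (simp add: field_simps)

lemma alg3: "(E::complex) * a + E * b - E * w = - E * (w - a - b)"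
  by (simp add: algebra_simps)

lemma alg4: "((e::real) / L) * ((tau / 2)\<^sup>2 * m + 2 * (e * tau\<^sup>2 * Q)) * (tau / 2)
    = (e / L) * (tau ^ 3 / 8 * m + e * tau ^ 3 * Q)"
  by (simp add: power2_eq_square power3_eq_cube field_simps)

lemma mode_bound:
  fixes a b :: real and p :: nat and eps T tau tn :: real and psi :: "real \<Rightarrow> int \<Rightarrow> complex"
    and l :: int and t \<alpha> :: real and M1 :: ennreal
  assumes ab: "a < b" and t: "2 \<le> t" and al: "0 \<le> \<alpha>"
    and sol: "is_solution a b p eps T psi" and eps: "0 < eps" "eps \<le> 1"
    and tn: "0 \<le> tn" and tau: "0 < tau" "tn + tau \<le> T"
    and hpsi: "\<And>r k. r \<in> {0..T} \<Longrightarrow> norm (psi r k) \<le> \<alpha> * pw a b t k"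
    and fin: "\<And>m l. Am (\<lambda>k. ennreal (norm (psi tn k) + norm (psi tn (- k)))) m l < \<infinity>"
    and M1: "M1 = (let xa = (\<lambda>k. ennreal (norm (psi tn k) + norm (psi tn (- k)))) in
       Wt a b 2 (Am xa (p + 1)) l + Cm xa (Wt a b 1 xa) (Wt a b 2 xa) (p + 1) l + 2 * Wt a b 1 (Bm xa (Wt a b 1 xa) (p + 1)) l)"
    and M1fin: "M1 < \<infinity>"
  shows "norm (strang a b p eps tau (psi tn) l - psi (tn + tau) l)
     \<le> eps ^ p * tau ^ 3 / jbr a b l * (enn2real M1 + (\<alpha> * Cc a b t) ^ (p + 1) * Dn \<alpha> (Cc a b t) (p + 1) * pw a b t l)"
proof -
  define L where "L = jbr a b l"
  have L0: "0 < L" unfolding L_def by (rule jbr_pos)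
  define \<kappa> where "\<kappa> = \<i> * complex_of_real (eps ^ p / L)"
  have nk: "norm \<kappa> = eps ^ p / L" unfolding \<kappa>_def norm_mult norm_of_real using eps L0 by simp
  define \<psi>0 where "\<psi>0 = psi tn"
  define P where "P = (\<alpha> * Cc a b t) ^ (p + 1)"
  define D where "D = Dn \<alpha> (Cc a b t) (p + 1)"
  have P0: "0 \<le> P" unfolding P_def using al Cc_nonneg by simp
  have D0: "0 \<le> D" unfolding D_def using Dn_nonneg[OF al Cc_nonneg] .
  define m1 where "m1 = enn2real M1"
  have m1: "M1 = ennreal m1" "0 \<le> m1" unfolding m1_def using M1fin by auto
  have Gb: "norm (Gnl p (psi r) k) \<le> P * pw a b t k" if "r \<in> {0..T}" for r k
    unfolding Gnl_def P_def by (rule cp_pw[OF ab t al]) (rule re_part_pw, rule hpsi[OF that])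
  have tnT: "tn \<in> {0..T}" using tn tau by auto
  have stepC: "norm (Gnl p (psi (tn + \<sigma>)) l - Gnl p (phiT a b \<sigma> \<psi>0) l) \<le> eps ^ p * tau\<^sup>2 * P * D * pw a b t l"
    if s: "\<sigma> \<in> {0..tau}" for \<sigma>
  proof -
    have e0: "0 \<le> eps ^ p * \<sigma>\<^sup>2 * P" using eps P0 by simp
    have hx: "norm (re_part (psi (tn + \<sigma>)) k) \<le> \<alpha> * pw a b t k" for k
      by (rule re_part_pw, rule hpsi) (use s tn tau in auto)
    have hy: "norm (re_part (phiT a b \<sigma> \<psi>0) k) \<le> \<alpha> * pw a b t k" for k
      by (rule re_part_pw) (simp add: phiT_ex norm_mult \<psi>0_def hpsi[OF tnT])
    have hd: "norm (re_part (psi (tn + \<sigma>)) k - re_part (phiT a b \<sigma> \<psi>0) k) \<le> (eps ^ p * \<sigma>\<^sup>2 * P) * pw a b t k" for k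
      unfolding \<psi>0_def by (rule re_diff_bound[OF sol tn _ _ Gb eps(1)]) (use s tau in auto)
    have "norm (Gnl p (psi (tn + \<sigma>)) l - Gnl p (phiT a b \<sigma> \<psi>0) l) \<le> (eps ^ p * \<sigma>\<^sup>2 * P) * D * pw a b t l"
      unfolding Gnl_def D_def by (rule cp_lip[OF ab t al e0 hx hy hd])
    also have "\<dots> \<le> eps ^ p * tau\<^sup>2 * P * D * pw a b t l"
    proof -
      have "\<sigma>\<^sup>2 \<le> tau\<^sup>2" using s by (intro power_mono) auto
      then show ?thesis using eps P0 D0 pw_nonneg[of a b t l]
        by (intro mult_right_mono mult_left_mono) auto
    qed
    finally show ?thesis .
  qed
  define W where "W r = ex (r * (- L) + tn * L) * psi r l" for r
  define W' where "W' r = ex (r * (- L) + tn * L) * (\<kappa> * Gnl p (psi r) l)" for r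
  have subT: "{tn..tn + tau} \<subseteq> {0..T}" using tn tau by auto
  have dW: "(W has_vector_derivative W' r) (at r within {tn..tn + tau})" if "r \<in> {tn..tn + tau}" for r
    unfolding W_def W'_def \<kappa>_def L_def by (rule w_deriv[OF sol subT that])
  define H where "H \<sigma> = ex (\<sigma> * (- L)) * Gnl p (phiT a b \<sigma> \<psi>0) l" for \<sigma>
  define c where "c = tau / 2"
  have c0: "0 < c" unfolding c_def using tau by simp
  have H2: "norm (H (c + u) + H (c - u) - 2 * H c) \<le> u\<^sup>2 * m1" for u
  proof -
    have "ennreal (norm (H (c + u) + H (c - u) - 2 * H c)) \<le> ennreal (u\<^sup>2) * M1"
      unfolding H_def L_def M1 Let_def \<psi>0_def by (rule h_2diff[OF fin])
    also have "\<dots> = ennreal (u\<^sup>2 * m1)" using m1 by (simp add: ennreal_mult)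
    finally show ?thesis using m1 by (simp add: ennreal_le_iff)
  qed
  have W'g: "W' (tn + \<sigma>) = \<kappa> * (ex (\<sigma> * (- L)) * Gnl p (psi (tn + \<sigma>)) l)" for \<sigma>
  proof -
    have "(tn + \<sigma>) * (- L) + tn * L = \<sigma> * (- L)" by (simp add: algebra_simps)
    then show ?thesis unfolding W'_def by (simp add: mult_ac)
  qed
  have gH: "norm (ex (\<sigma> * (- L)) * Gnl p (psi (tn + \<sigma>)) l - H \<sigma>) \<le> eps ^ p * tau\<^sup>2 * P * D * pw a b t l"
    if "\<sigma> \<in> {0..tau}" for \<sigma>
  proof -
    have "ex (\<sigma> * (- L)) * Gnl p (psi (tn + \<sigma>)) l - H \<sigma> = ex (\<sigma> * (- L)) * (Gnl p (psi (tn + \<sigma>)) l - Gnl p (phiT a b \<sigma> \<psi>0) l)"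
      unfolding H_def by (simp add: algebra_simps)
    then show ?thesis using stepC[OF that] by (simp add: norm_mult)
  qed
  define \<Phi> where "\<Phi> u = W (tn + c + u) - W (tn + c - u) - of_real (2 * u) * \<kappa> * H c" for u
  define \<Phi>' where "\<Phi>' u = W' (tn + c + u) + W' (tn + c - u) - 2 * \<kappa> * H c" for u
  have dPhi: "(\<Phi> has_vector_derivative \<Phi>' u) (at u within {0..c})" if u: "u \<in> {0..c}" for u
  proof -
    have d1: "((\<lambda>u. W (tn + c + u)) has_vector_derivative W' (tn + c + u)) (at u within {0..c})"
      by (rule shift_deriv_p[OF dW _ _ u]) (use c0 tau in \<open>auto simp: c_def\<close>)
    have d2: "((\<lambda>u. W (tn + c - u)) has_vector_derivative - W' (tn + c - u)) (at u within {0..c})"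
      by (rule shift_deriv_m[OF dW _ _ u]) (use c0 tau in \<open>auto simp: c_def\<close>)
    have d3: "((\<lambda>u. of_real (2 * u) * \<kappa> * H c) has_vector_derivative (2 * \<kappa> * H c)) (at u within {0..c})"
      by (auto intro!: derivative_eq_intros)
    show ?thesis unfolding \<Phi>_def \<Phi>'_def
      using has_vector_derivative_diff[OF has_vector_derivative_diff[OF d1 d2] d3] by simp
  qed
  define B where "B = (eps ^ p / L) * (c\<^sup>2 * m1 + 2 * (eps ^ p * tau\<^sup>2 * P * D * pw a b t l))"
  have bPhi: "norm (\<Phi>' u) \<le> B" if u: "u \<in> {0..c}" for u
  proof -
    have s1: "c + u \<in> {0..tau}" and s2: "c - u \<in> {0..tau}" using u c0 unfolding c_def by auto
    have a1: "W' (tn + c + u) = \<kappa> * (ex ((c + u) * (- L)) * Gnl p (psi (tn + (c + u))) l)"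
      using W'g[of "c + u"] by (simp add: add.assoc)
    have a2: "W' (tn + c - u) = \<kappa> * (ex ((c - u) * (- L)) * Gnl p (psi (tn + (c - u))) l)"
      using W'g[of "c - u"] by (simp add: add_diff_eq)
    have eqP: "\<Phi>' u = \<kappa> * ((H (c + u) + H (c - u) - 2 * H c)
        + (ex ((c + u) * (- L)) * Gnl p (psi (tn + (c + u))) l - H (c + u))
        + (ex ((c - u) * (- L)) * Gnl p (psi (tn + (c - u))) l - H (c - u)))"
      unfolding \<Phi>'_def a1 a2 by (rule alg1)
    have "norm (\<Phi>' u) = norm \<kappa> * norm ((H (c + u) + H (c - u) - 2 * H c)
        + (ex ((c + u) * (- L)) * Gnl p (psi (tn + (c + u))) l - H (c + u))
        + (ex ((c - u) * (- L)) * Gnl p (psi (tn + (c - u))) l - H (c - u)))"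
      unfolding eqP norm_mult ..
    also have "\<dots> \<le> norm \<kappa> * (norm (H (c + u) + H (c - u) - 2 * H c)
        + norm (ex ((c + u) * (- L)) * Gnl p (psi (tn + (c + u))) l - H (c + u))
        + norm (ex ((c - u) * (- L)) * Gnl p (psi (tn + (c - u))) l - H (c - u)))"
      by (intro mult_left_mono tri3 norm_ge_zero)
    also have "\<dots> \<le> (eps ^ p / L) * (u\<^sup>2 * m1 + eps ^ p * tau\<^sup>2 * P * D * pw a b t l + eps ^ p * tau\<^sup>2 * P * D * pw a b t l)"
      unfolding nk using eps L0 by (intro mult_left_mono add_mono H2 gH s1 s2) auto
    also have "\<dots> \<le> B"
    proof -
      have "u\<^sup>2 \<le> c\<^sup>2" using u by (intro power_mono) auto
      then have "u\<^sup>2 * m1 \<le> c\<^sup>2 * m1" using m1 by (intro mult_right_mono) auto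
      then show ?thesis unfolding B_def using eps L0 by (intro mult_left_mono) auto
    qed
    finally show ?thesis .
  qed
  have "norm (\<Phi> c - \<Phi> 0) \<le> B * (c - 0)"
    by (rule mvt_bound[OF _ dPhi bPhi]) (use c0 in auto)
  moreover have "\<Phi> 0 = 0" unfolding \<Phi>_def by simp
  ultimately have Phic: "norm (\<Phi> c) \<le> B * c" by simp
  have "strang a b p eps tau (psi tn) l - psi (tn + tau) l = - ex (tau * L) * \<Phi> c"
  proof -
    have w0: "W tn = \<psi>0 l" unfolding W_def \<psi>0_def by simp
    have wt: "psi (tn + tau) l = ex (tau * L) * W (tn + tau)"
    proof -
      have "ex (tau * L) * ex ((tn + tau) * (- L) + tn * L) = ex (tau * L + ((tn + tau) * (- L) + tn * L))"
        by (simp add: ex_add)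
      also have "tau * L + ((tn + tau) * (- L) + tn * L) = 0" by (simp add: algebra_simps)
      finally show ?thesis unfolding W_def by (simp add: mult.assoc[symmetric])
    qed
    have hc: "ex (tau * L) * (complex_of_real tau * \<kappa> * H c)
        = ex (tau / 2 * L) * (complex_of_real (eps ^ p * tau) * (\<i> * Gnl p (phiT a b (tau / 2) \<psi>0) l / complex_of_real L))"
    proof -
      have ee: "ex (tau * L) * ex (c * (- L)) = ex (tau / 2 * L)"
        unfolding c_def by (simp add: ex_add[symmetric] algebra_simps)
      have "ex (tau * L) * (complex_of_real tau * \<kappa> * H c)
          = (ex (tau * L) * ex (c * (- L))) * (complex_of_real tau * \<kappa> * Gnl p (phiT a b (tau / 2) \<psi>0) l)"
        unfolding H_def c_def by (simp only: mult_ac)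
      also have "\<dots> = ex (tau / 2 * L) * (complex_of_real (eps ^ p * tau) * (\<i> * Gnl p (phiT a b (tau / 2) \<psi>0) l / complex_of_real L))"
        unfolding ee \<kappa>_def using alg2[of L tau "eps ^ p" "Gnl p (phiT a b (tau / 2) \<psi>0) l"] L0 by simp
      finally show ?thesis .
    qed
    have e2: "tn + c + c = tn + tau" "tn + c - c = tn" "complex_of_real (2 * c) = complex_of_real tau" unfolding c_def by auto
    have "strang a b p eps tau (psi tn) l - psi (tn + tau) l
        = ex (tau * L) * \<psi>0 l + ex (tau * L) * (complex_of_real tau * \<kappa> * H c) - ex (tau * L) * W (tn + tau)"
      unfolding strang_mode L_def[symmetric] \<psi>0_def[symmetric] hc[symmetric] wt ..
    also have "\<dots> = - ex (tau * L) * \<Phi> c"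
      unfolding alg3 \<Phi>_def e2 w0 by (simp only: mult.assoc)
    finally show ?thesis .
  qed
  then have "norm (strang a b p eps tau (psi tn) l - psi (tn + tau) l) = norm (\<Phi> c)"
    by (simp add: norm_mult)
  also have "\<dots> \<le> B * c" by (rule Phic)
  also have "\<dots> \<le> eps ^ p * tau ^ 3 / L * (m1 + P * D * pw a b t l)"
  proof -
    have ep: "eps ^ p \<le> 1" using eps by (simp add: power_le_one)
    have "B * c = eps ^ p / L * (tau ^ 3 / 8 * m1 + eps ^ p * tau ^ 3 * (P * D * pw a b t l))"
      unfolding B_def c_def using alg4[of "eps ^ p" L tau m1 "P * D * pw a b t l"] by (simp only: mult.assoc)
    also have "\<dots> \<le> eps ^ p / L * (tau ^ 3 * m1 + tau ^ 3 * P * D * pw a b t l)"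
    proof -
      have "tau ^ 3 / 8 * m1 \<le> tau ^ 3 * m1" using tau m1 by (simp add: mult_right_mono)
      moreover have "eps ^ p * (tau ^ 3 * P * D * pw a b t l) \<le> 1 * (tau ^ 3 * P * D * pw a b t l)"
        using ep tau P0 D0 pw_nonneg[of a b t l] by (intro mult_right_mono) auto
      ultimately show ?thesis using eps L0 by (intro mult_left_mono) (auto simp: mult_ac)
    qed
    also have "\<dots> = eps ^ p * tau ^ 3 / L * (m1 + P * D * pw a b t l)" using L0 by (simp add: field_simps)
    finally show ?thesis .
  qed
  finally show ?thesis unfolding L_def m1_def P_def D_def .
qed

lemma w_powr: "(1 + (mu a b k)\<^sup>2) powr r = (jbr a b k powr r)\<^sup>2"
proof -
  have "1 + (mu a b k)\<^sup>2 = jbr a b k * jbr a b k" using jbr_sq[of a b k] by (simp add: power2_eq_square)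
  then have "(1 + (mu a b k)\<^sup>2) powr r = jbr a b k powr r * jbr a b k powr r"
    by (simp add: powr_mult less_imp_le[OF jbr_pos])
  then show ?thesis by (simp add: power2_eq_square)
qed

lemma hs_Qn: "hs_sq a b r z = Qn a b r (\<lambda>k. ennreal (norm (z k)))"
  unfolding hs_sq_def Qn_def Wt_def infsum_CS
  by (intro arg_cong[where f=CS] ext) (simp add: w_powr ennreal_mult[symmetric] ennreal_power power_mult_distrib del: ennreal_mult)

lemma Qn_single: "(Wt a b r x k)\<^sup>2 \<le> Qn a b r x"
  unfolding Qn_def using finite_sum_le_CS[of "{k}" "\<lambda>k. (Wt a b r x k)\<^sup>2"] by simp

lemma Qn_fin_pt:
  assumes "Qn a b r x < \<infinity>" "0 \<le> r"
  shows "x k < \<infinity>"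
proof -
  have "x k \<le> Wt a b r x k"
  proof -
    have "1 \<le> jbr a b k powr r" using ge_one_powr_ge_zero[OF jbr_ge1 assms(2)] .
    then have "1 \<le> ennreal (jbr a b k powr r)" by simp
    then have "1 * x k \<le> ennreal (jbr a b k powr r) * x k" by (rule mult_right_mono) simp
    then show ?thesis unfolding Wt_def by simp
  qed
  moreover have "(Wt a b r x k)\<^sup>2 < \<infinity>" using Qn_single[of a b r x k] assms(1) by simp
  then have "Wt a b r x k < \<infinity>"
    unfolding power2_eq_square using ennreal_mult_less_top[of "Wt a b r x k" "Wt a b r x k"] by auto
  ultimately show ?thesis by (rule le_less_trans)
qed

lemma pt_bound:
  assumes "hs_sq a b (s + 1) z \<le> ennreal (K\<^sup>2)"
  shows "norm (z k) \<le> \<bar>K\<bar> * pw a b (s + 1) k"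
proof -
  have "(Wt a b (s + 1) (\<lambda>k. ennreal (norm (z k))) k)\<^sup>2 \<le> ennreal (K\<^sup>2)"
    using Qn_single[of a b "s + 1" "\<lambda>k. ennreal (norm (z k))" k] assms unfolding hs_Qn by simp
  then have "ennreal ((jbr a b k powr (s + 1) * norm (z k))\<^sup>2) \<le> ennreal (K\<^sup>2)"
    unfolding Wt_def by (simp add: ennreal_mult[symmetric] ennreal_power del: ennreal_mult)
  then have "(jbr a b k powr (s + 1) * norm (z k))\<^sup>2 \<le> K\<^sup>2" by (simp add: ennreal_le_iff)
  then have "jbr a b k powr (s + 1) * norm (z k) \<le> \<bar>K\<bar>"
  proof -
    have "\<bar>jbr a b k powr (s + 1) * norm (z k)\<bar> \<le> \<bar>K\<bar>" using abs_le_square_iff \<open>_ \<le> K\<^sup>2\<close> by blast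
    then show ?thesis by simp
  qed
  moreover have Lt: "0 < jbr a b k powr (s + 1)" using jbr_pos[of a b k] by simp
  ultimately have "norm (z k) \<le> \<bar>K\<bar> / jbr a b k powr (s + 1)"
    by (simp add: pos_le_divide_eq mult.commute)
  then show ?thesis unfolding pw_def powr_minus by (simp only: divide_inverse)
qed

lemma Qn_reflect: "Qn a b r (\<lambda>k. x (- k)) = Qn a b r x"
  unfolding Qn_def Wt_def using CS_neg[of "\<lambda>k. (ennreal (jbr a b k powr r) * x k)\<^sup>2"] by (simp add: jbr_neg)

lemma Qn_xa:
  assumes "hs_sq a b r z \<le> ennreal (K\<^sup>2)"
  shows "Qn a b r (\<lambda>k. ennreal (norm (z k) + norm (z (- k)))) \<le> ennreal (4 * K\<^sup>2)"
proof -
  have "Qn a b r (\<lambda>k. ennreal (norm (z k) + norm (z (- k))))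
      = Qn a b r (\<lambda>k. ennreal (norm (z k)) + ennreal (norm (z (- k))))"
    by (simp add: ennreal_plus)
  also have "\<dots> \<le> 2 * Qn a b r (\<lambda>k. ennreal (norm (z k))) + 2 * Qn a b r (\<lambda>k. ennreal (norm (z (- k))))"
    by (rule Qn_add)
  also have "\<dots> = 4 * hs_sq a b r z"
  proof -
    have f: "2 * q + 2 * q = 4 * (q::ennreal)" for q
    proof -
      have "2 * q + 2 * q = 2 * (2 * q)" by (simp add: mult_2)
      also have "\<dots> = 4 * q" by (simp add: mult.assoc[symmetric])
      finally show ?thesis .
    qed
    show ?thesis unfolding hs_Qn Qn_reflect[of a b r "\<lambda>k. ennreal (norm (z k))"] by (rule f)
  qed
  also have "\<dots> \<le> 4 * ennreal (K\<^sup>2)" using assms by (intro mult_left_mono) auto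
  finally show ?thesis by (simp add: ennreal_mult)
qed

lemma Qn_M1:
  "Qn a b r (\<lambda>l. Wt a b 2 A l + C l + 2 * Wt a b 1 B l) \<le> 4 * Qn a b (r + 2) A + 4 * Qn a b r C + 8 * Qn a b (r + 1) B"
proof -
  have "Qn a b r (\<lambda>l. Wt a b 2 A l + C l + 2 * Wt a b 1 B l) \<le> 2 * Qn a b r (\<lambda>l. Wt a b 2 A l + C l) + 2 * Qn a b r (\<lambda>l. 2 * Wt a b 1 B l)"
    by (rule Qn_add)
  also have "\<dots> \<le> 2 * (2 * Qn a b r (Wt a b 2 A) + 2 * Qn a b r C) + 2 * (2\<^sup>2 * Qn a b r (Wt a b 1 B))"
    unfolding Qn_cmult by (intro add_mono mult_left_mono Qn_add) auto
  also have "\<dots> = 4 * Qn a b (r + 2) A + 4 * Qn a b r C + 8 * Qn a b (r + 1) B"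
    by (simp add: Qn_Wt distrib_left mult.assoc[symmetric] power2_eq_square)
  finally show ?thesis .
qed

lemma sq_sum_le: "((x::real) + y)\<^sup>2 \<le> 2 * x\<^sup>2 + 2 * y\<^sup>2"
  using sum_squares_bound[of x y] by (simp add: power2_eq_square algebra_simps)

lemma final_pointwise:
  fixes L e m d s D :: real
  assumes L: "1 \<le> L" and e: "0 \<le> e" and m: "0 \<le> m" and d: "0 \<le> d"
    and D0: "0 \<le> D" and D: "D \<le> e / L * (m + d * L powr (- (s + 1)))"
  shows "ennreal ((L powr s * D)\<^sup>2) \<le> ennreal (e\<^sup>2) * (2 * (ennreal (L powr (s - 1)) * ennreal m)\<^sup>2 + 2 * (ennreal (d\<^sup>2) * ennreal (1 / L\<^sup>2)))"
proof -
  have L0: "0 < L" using L by simp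
  define X where "X = L powr (s - 1) * m"
  define Y where "Y = d / L\<^sup>2"
  have X0: "0 \<le> X" unfolding X_def using m by simp
  have Y0: "0 \<le> Y" unfolding Y_def using d by simp
  have Ls: "L powr s = L powr (s - 1) * L" using powr_add[of L "s - 1" 1] L0 by simp
  have LsQ: "L powr (s - 1) * (d * L powr (- (s + 1))) = Y"
  proof -
    have "L powr (s - 1) * L powr (- (s + 1)) = L powr (- 2)" using L0 by (simp add: powr_add[symmetric])
    also have "\<dots> = 1 / L\<^sup>2" using L0 powr_realpow[OF L0, of 2] by (simp add: powr_minus_divide)
    finally show ?thesis unfolding Y_def by (simp add: mult_ac)
  qed
  have "L powr s * D \<le> L powr s * (e / L * (m + d * L powr (- (s + 1))))" using D by (intro mult_left_mono) auto
  also have "\<dots> = e * (L powr (s - 1) * m + L powr (s - 1) * (d * L powr (- (s + 1))))"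
    unfolding Ls using L0 by (simp add: field_simps)
  also have "\<dots> = e * (X + Y)" unfolding LsQ X_def ..
  finally have b1: "L powr s * D \<le> e * (X + Y)" .
  have "(L powr s * D)\<^sup>2 \<le> (e * (X + Y))\<^sup>2" using b1 D0 by (intro power_mono) auto
  also have "\<dots> = e\<^sup>2 * (X + Y)\<^sup>2" by (simp add: power_mult_distrib)
  also have "\<dots> \<le> e\<^sup>2 * (2 * X\<^sup>2 + 2 * Y\<^sup>2)" by (intro mult_left_mono sq_sum_le) auto
  also have "\<dots> \<le> e\<^sup>2 * (2 * X\<^sup>2 + 2 * (d\<^sup>2 * (1 / L\<^sup>2)))"
  proof -
    have "Y\<^sup>2 = d\<^sup>2 * (1 / L\<^sup>2) * (1 / L\<^sup>2)" unfolding Y_def by (simp add: power2_eq_square)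
    also have "\<dots> \<le> d\<^sup>2 * (1 / L\<^sup>2) * 1" using L by (intro mult_left_mono) (auto simp: power_le_one)
    finally show ?thesis by (intro mult_left_mono add_left_mono) auto
  qed
  finally have r: "(L powr s * D)\<^sup>2 \<le> e\<^sup>2 * (2 * X\<^sup>2 + 2 * (d\<^sup>2 * (1 / L\<^sup>2)))" .
  have "ennreal ((L powr s * D)\<^sup>2) \<le> ennreal (e\<^sup>2 * (2 * X\<^sup>2 + 2 * (d\<^sup>2 * (1 / L\<^sup>2))))"
    by (rule ennreal_leI[OF r])
  also have "\<dots> = ennreal (e\<^sup>2) * (2 * (ennreal (L powr (s - 1)) * ennreal m)\<^sup>2 + 2 * (ennreal (d\<^sup>2) * ennreal (1 / L\<^sup>2)))"
  proof -
    have e3: "ennreal (d\<^sup>2 * (1 / L\<^sup>2)) = ennreal (d\<^sup>2) * ennreal (1 / L\<^sup>2)" by (rule ennreal_mult) auto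
    have "ennreal (2 * d\<^sup>2 / L\<^sup>2) = ennreal (2 * (d\<^sup>2 * (1 / L\<^sup>2)))" by simp
    also have "\<dots> = ennreal 2 * ennreal (d\<^sup>2 * (1 / L\<^sup>2))" by (rule ennreal_mult) auto
    also have "\<dots> = 2 * (ennreal (d\<^sup>2) * ennreal (1 / L\<^sup>2))" unfolding e3 by simp
    finally have f: "ennreal (2 * d\<^sup>2 / L\<^sup>2) = 2 * (ennreal (d\<^sup>2) * ennreal (1 / L\<^sup>2))" .
    show ?thesis unfolding X_def using m L0
      by (simp add: ennreal_mult ennreal_plus ennreal_power[symmetric] power_mult_distrib f del: ennreal_power)
  qed
  finally show ?thesis .
qed

theorem lemma3p3:
  fixes a b :: real and p :: nat and s :: real and K :: real
  assumes "a < b" and "p \<ge> 1" and "s \<ge> 1"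
  shows "\<exists>M0::real. \<forall>eps T (psi :: real \<Rightarrow> int \<Rightarrow> complex) tau tn.
     0 < eps \<and> eps \<le> 1 \<and> 0 < T \<and>
     is_solution a b p eps T psi \<and>
     (\<forall>t\<in>{0..T}. hs_sq a b (s + 1) (psi t) \<le> ennreal (K\<^sup>2)) \<and>
     0 < tau \<and> tau \<le> 1 / eps ^ p \<and> 0 \<le> tn \<and> tn + tau \<le> T
     \<longrightarrow> hs_sq a b s (\<lambda>l. strang a b p eps tau (psi tn) l - psi (tn + tau) l)
           \<le> ennreal ((M0 * eps ^ p * tau ^ 3)\<^sup>2)"
proof -
  note ab = assms(1) and s1 = assms(3)
  define tt where "tt = s + 1"
  have tt2: "2 \<le> tt" unfolding tt_def using s1 by simp
  define \<alpha> where "\<alpha> = \<bar>K\<bar>"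
  have al: "0 \<le> \<alpha>" unfolding \<alpha>_def by simp
  define C where "C = Cc a b tt"
  define P where "P = (\<alpha> * C) ^ (p + 1)"
  define D where "D = Dn \<alpha> C (p + 1)"
  have PD0: "0 \<le> P * D" unfolding P_def D_def C_def using al Cc_nonneg Dn_nonneg[OF al Cc_nonneg] by simp
  define K2 where "K2 = ennreal (4 * K\<^sup>2)"
  have K2fin: "K2 < \<infinity>" unfolding K2_def by simp
  note PB = pow_bounds[OF ab s1 K2fin]
  obtain Mq where Mq: "Mq < \<infinity>" and HMq: "\<And>x. Qn a b (s + 1) x \<le> K2 \<Longrightarrow>
     Qn a b (s + 1) (Am x (p + 1)) \<le> Mq \<and> Qn a b s (Bm x (Wt a b 1 x) (p + 1)) \<le> Mq \<and>
     Qn a b (s - 1) (Cm x (Wt a b 1 x) (Wt a b 2 x) (p + 1)) \<le> Mq"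
    using PB[of "p + 1"] by blast
  define Ctot where "Ctot = 2 * (16 * Mq) + 2 * (ennreal ((P * D)\<^sup>2) * Sj a b)"
  have Ctotfin: "Ctot < \<infinity>"
    unfolding Ctot_def using Mq Sj_finite[OF ab] unfolding Sj_def by (simp add: ennreal_mult_less_top)
  define M0 where "M0 = sqrt (enn2real Ctot)"
  have M0sq: "ennreal (M0\<^sup>2) = Ctot" unfolding M0_def using Ctotfin by simp
  show ?thesis
  proof (intro exI[of _ M0] allI impI)
    fix eps T :: real and psi :: "real \<Rightarrow> int \<Rightarrow> complex" and tau tn :: real
    assume H: "0 < eps \<and> eps \<le> 1 \<and> 0 < T \<and> is_solution a b p eps T psi \<and>
      (\<forall>t\<in>{0..T}. hs_sq a b (s + 1) (psi t) \<le> ennreal (K\<^sup>2)) \<and>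
      0 < tau \<and> tau \<le> 1 / eps ^ p \<and> 0 \<le> tn \<and> tn + tau \<le> T"
    then have eps: "0 < eps" "eps \<le> 1" and sol: "is_solution a b p eps T psi"
      and hs: "\<And>r. r \<in> {0..T} \<Longrightarrow> hs_sq a b (s + 1) (psi r) \<le> ennreal (K\<^sup>2)"
      and tau: "0 < tau" "tn + tau \<le> T" and tn: "0 \<le> tn" by auto
    have hpsi: "norm (psi r k) \<le> \<alpha> * pw a b tt k" if "r \<in> {0..T}" for r k
      unfolding \<alpha>_def tt_def by (rule pt_bound[OF hs[OF that]])
    have tnT: "tn \<in> {0..T}" using tn tau by auto
    define xa where "xa = (\<lambda>k. ennreal (norm (psi tn k) + norm (psi tn (- k))))"
    have xaK: "Qn a b (s + 1) xa \<le> K2" unfolding xa_def K2_def by (rule Qn_xa[OF hs[OF tnT]])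
    have fin: "Am xa m l < \<infinity>" for m l
    proof -
      obtain Mm where "Mm < \<infinity>" and "\<And>x. Qn a b (s + 1) x \<le> K2 \<Longrightarrow> Qn a b (s + 1) (Am x m) \<le> Mm"
        using PB[of m] by blast
      then have "Qn a b (s + 1) (Am xa m) < \<infinity>" using xaK by (meson le_less_trans)
      then show ?thesis by (rule Qn_fin_pt) (use s1 in simp)
    qed
    define M1 where "M1 l = (let xa = (\<lambda>k. ennreal (norm (psi tn k) + norm (psi tn (- k)))) in
       Wt a b 2 (Am xa (p + 1)) l + Cm xa (Wt a b 1 xa) (Wt a b 2 xa) (p + 1) l + 2 * Wt a b 1 (Bm xa (Wt a b 1 xa) (p + 1)) l)" for l
    have M1Q: "Qn a b (s - 1) M1 \<le> 16 * Mq"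
    proof -
      have M1e: "M1 = (\<lambda>l. Wt a b 2 (Am xa (p + 1)) l + Cm xa (Wt a b 1 xa) (Wt a b 2 xa) (p + 1) l + 2 * Wt a b 1 (Bm xa (Wt a b 1 xa) (p + 1)) l)"
        unfolding M1_def xa_def Let_def by simp
      have "Qn a b (s - 1) M1 \<le> 4 * Qn a b (s - 1 + 2) (Am xa (p + 1)) + 4 * Qn a b (s - 1) (Cm xa (Wt a b 1 xa) (Wt a b 2 xa) (p + 1)) + 8 * Qn a b (s - 1 + 1) (Bm xa (Wt a b 1 xa) (p + 1))"
        unfolding M1e by (rule Qn_M1)
      also have "\<dots> \<le> 4 * Mq + 4 * Mq + 8 * Mq"
        using HMq[OF xaK] by (intro add_mono mult_left_mono) (auto simp: add_ac)
      also have "\<dots> = 16 * Mq" by (simp add: distrib_right[symmetric])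
      finally show ?thesis .
    qed
    have M1fin: "M1 l < \<infinity>" for l
      by (rule Qn_fin_pt[of a b "s - 1"]) (use M1Q Mq s1 in \<open>auto simp: ennreal_mult_less_top le_less_trans\<close>)
    have fin': "\<And>m l. Am (\<lambda>k. ennreal (norm (psi tn k) + norm (psi tn (- k)))) m l < \<infinity>"
      using fin unfolding xa_def .
    have mode: "norm (strang a b p eps tau (psi tn) l - psi (tn + tau) l)
       \<le> eps ^ p * tau ^ 3 / jbr a b l * (enn2real (M1 l) + P * D * pw a b tt l)" for l
      unfolding P_def D_def C_def
      by (rule mode_bound[OF ab tt2 al sol eps tn tau hpsi fin' _ M1fin]) (simp_all only: M1_def)
    define e where "e = eps ^ p * tau ^ 3"
    have e0: "0 \<le> e" unfolding e_def using eps tau by simp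
    have pt: "(Wt a b s (\<lambda>l. ennreal (norm (strang a b p eps tau (psi tn) l - psi (tn + tau) l))) l)\<^sup>2
        \<le> ennreal (e\<^sup>2) * (2 * (Wt a b (s - 1) M1 l)\<^sup>2 + 2 * (ennreal ((P * D)\<^sup>2) * ennreal (1 / (jbr a b l)\<^sup>2)))" for l
    proof -
      have m1: "M1 l = ennreal (enn2real (M1 l))" using M1fin[of l] by simp
      have "(Wt a b s (\<lambda>l. ennreal (norm (strang a b p eps tau (psi tn) l - psi (tn + tau) l))) l)\<^sup>2
          = ennreal ((jbr a b l powr s * norm (strang a b p eps tau (psi tn) l - psi (tn + tau) l))\<^sup>2)"
        unfolding Wt_def by (simp add: ennreal_mult[symmetric] ennreal_power del: ennreal_mult)
      also have "\<dots> \<le> ennreal (e\<^sup>2) * (2 * (ennreal (jbr a b l powr (s - 1)) * ennreal (enn2real (M1 l)))\<^sup>2 + 2 * (ennreal ((P * D)\<^sup>2) * ennreal (1 / (jbr a b l)\<^sup>2)))"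
        by (rule final_pointwise[OF jbr_ge1 e0 _ PD0 norm_ge_zero]) (use mode[of l] in \<open>simp_all add: e_def tt_def pw_def mult.assoc\<close>)
      also have "\<dots> = ennreal (e\<^sup>2) * (2 * (Wt a b (s - 1) M1 l)\<^sup>2 + 2 * (ennreal ((P * D)\<^sup>2) * ennreal (1 / (jbr a b l)\<^sup>2)))"
        unfolding Wt_def using m1 by simp
      finally show ?thesis .
    qed
    have "hs_sq a b s (\<lambda>l. strang a b p eps tau (psi tn) l - psi (tn + tau) l)
        = Qn a b s (\<lambda>l. ennreal (norm (strang a b p eps tau (psi tn) l - psi (tn + tau) l)))"
      by (rule hs_Qn)
    also have "\<dots> \<le> CS (\<lambda>l. ennreal (e\<^sup>2) * (2 * (Wt a b (s - 1) M1 l)\<^sup>2 + 2 * (ennreal ((P * D)\<^sup>2) * ennreal (1 / (jbr a b l)\<^sup>2))))"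
      unfolding Qn_def by (rule CS_mono) (rule pt)
    also have "\<dots> = ennreal (e\<^sup>2) * (2 * Qn a b (s - 1) M1 + 2 * (ennreal ((P * D)\<^sup>2) * Sj a b))"
      unfolding Qn_def Sj_def by (simp add: CS_cmult CS_add)
    also have "\<dots> \<le> ennreal (e\<^sup>2) * Ctot"
      unfolding Ctot_def using M1Q by (intro mult_left_mono add_mono) auto
    also have "\<dots> = ennreal ((M0 * eps ^ p * tau ^ 3)\<^sup>2)"
    proof -
      have "(M0 * eps ^ p * tau ^ 3)\<^sup>2 = M0\<^sup>2 * e\<^sup>2" unfolding e_def by (simp add: power_mult_distrib mult.assoc)
      then show ?thesis using M0sq by (simp add: ennreal_mult mult.commute)
    qed
    finally show "hs_sq a b s (\<lambda>l. strang a b p eps tau (psi tn) l - psi (tn + tau) l) \<le> ennreal ((M0 * eps ^ p * tau ^ 3)\<^sup>2)" .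
  qed
qed

end
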